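(* Let $d \equiv 2 \pmod 4$ be a square-free positive integer such that both equations $x^2 - dy^2 = -1$ and $x^2 - dy^2 = 6$ have solutions in integers $x, y$. Let $n = (4m+2) + 4k\sqrt{d}$ with $m, k \in \mathbb{Z}$, and suppose that $(m,k)$ satisfies neither ($m \equiv 9 \pmod{12}$ and $k \equiv 3 \pmod 6$) nor ($m \equiv 0 \pmod{12}$ and $k \equiv 0 \pmod 6$). Then there exist infinitely many $D(n)$-quadruples in $\mathbb{Z}[\sqrt{d}]$.
   Context: For $n \in \mathbb{Z}[\sqrt{d}]$, a set $\{a_1,a_2,a_3,a_4\}$ of four distinct non-zero elements of $\mathbb{Z}[\sqrt{d}]$ is called a $D(n)$-quadruple in $\mathbb{Z}[\sqrt{d}]$ if $a_ia_j + n$ is a square of an element of $\mathbb{Z}[\sqrt{d}]$ for all $1 \le i < j \le 4$. *)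

theory Defs
  imports "HOL-Computational_Algebra.Squarefree"
begin

text \<open>Elements of Z[sqrt d] are represented as pairs (a, b) of integers standing for a + b sqrt d.
  For d not a perfect square this representation is unique.\<close>

type_synonym zsqrt = "int \<times> int"

definition zs_add :: "zsqrt \<Rightarrow> zsqrt \<Rightarrow> zsqrt" where
  "zs_add x y = (fst x + fst y, snd x + snd y)"

definition zs_mul :: "int \<Rightarrow> zsqrt \<Rightarrow> zsqrt \<Rightarrow> zsqrt" where
  "zs_mul d x y = (fst x * fst y + d * snd x * snd y, fst x * snd y + snd x * fst y)"

definition zs_is_square :: "int \<Rightarrow> zsqrt \<Rightarrow> bool" where
  "zs_is_square d z \<longleftrightarrow> (\<exists>w. z = zs_mul d w w)"

definition D_quadruple :: "int \<Rightarrow> zsqrt \<Rightarrow> zsqrt set \<Rightarrow> bool" where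
  "D_quadruple d n S \<longleftrightarrow> card S = 4 \<and> (0, 0) \<notin> S \<and>
     (\<forall>a\<in>S. \<forall>b\<in>S. a \<noteq> b \<longrightarrow> zs_is_square d (zs_add (zs_mul d a b) n))"

end

theory Submission
  imports Defs "HOL-Computational_Algebra.Polynomial"
begin


definition phi :: "int \<Rightarrow> zsqrt \<Rightarrow> real" where
  "phi d x = real_of_int (fst x) + real_of_int (snd x) * sqrt (real_of_int d)"

lemma phi_mul: "d \<ge> 0 \<Longrightarrow> phi d (zs_mul d x y) = phi d x * phi d y"
proof -
  assume "d \<ge> 0"
  hence s: "sqrt (real_of_int d) ^ 2 = real_of_int d" by simp
  show ?thesis unfolding phi_def zs_mul_def using s
    by (simp add: algebra_simps power2_eq_square)
qed

lemma phi_add: "phi d (zs_add x y) = phi d x + phi d y"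
  unfolding phi_def zs_add_def by (simp add: algebra_simps)

lemma nonsq_aux: 
  fixes d :: int assumes "d mod 4 = 2"
  shows "d * q^2 = p^2 \<Longrightarrow> q = 0"
proof (induction "nat \<bar>q\<bar>" arbitrary: p q rule: less_induct)
  case less
  show ?case
  proof (rule ccontr)
    assume q0: "q \<noteq> 0"
    have de: "even d" using assms by presburger
    have "even (p^2)" using less.prems de by (metis dvd_mult2)
    hence "even p" by simp
    then obtain p1 where p1: "p = 2*p1" by blast
    define d1 where "d1 = d div 2"
    have d1: "d = 2*d1" "odd d1" using assms unfolding d1_def by presburger+
    have "d1 * q^2 = 2 * p1^2" using less.prems p1 d1 by (simp add: power2_eq_square algebra_simps)
    hence "even (d1 * q^2)" by simp
    hence "even q" using d1 by simp
    then obtain q1 where q1: "q = 2*q1" by blast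
    have "d * q1^2 = p1^2" using less.prems p1 q1 by (simp add: power2_eq_square algebra_simps)
    moreover have "nat \<bar>q1\<bar> < nat \<bar>q\<bar>" using q1 q0 by auto
    ultimately have "q1 = 0" using less.hyps by blast
    thus False using q1 q0 by simp
  qed
qed

lemma phi_inj:
  assumes "d mod 4 = 2" "d > 0" "phi d x = phi d y"
  shows "x = y"
proof -
  obtain a b where x: "x = (a,b)" by fastforce
  obtain a' b' where y: "y = (a',b')" by fastforce
  have e: "real_of_int (b - b') * sqrt (real_of_int d) = real_of_int (a' - a)"
    using assms(3) unfolding x y phi_def by (simp add: algebra_simps)
  hence "(real_of_int (b - b') * sqrt (real_of_int d))^2 = (real_of_int (a' - a))^2" by simp
  hence "real_of_int (b - b')^2 * real_of_int d = real_of_int (a' - a)^2"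
    using assms(2) by (simp add: power_mult_distrib)
  hence "real_of_int (d * (b - b')^2) = real_of_int ((a' - a)^2)"
    by (simp add: mult.commute)
  hence "d * (b - b')^2 = (a' - a)^2" by (simp only: of_int_eq_iff)
  hence "b - b' = 0" using nonsq_aux[OF assms(1)] by blast
  with e show ?thesis unfolding x y by simp
qed



definition zneg :: "zsqrt \<Rightarrow> zsqrt" where "zneg x = (- fst x, - snd x)"
definition zconj :: "zsqrt \<Rightarrow> zsqrt" where "zconj x = (fst x, - snd x)"

lemma phi_neg: "phi d (zneg x) = - phi d x"
  unfolding phi_def zneg_def by simp

lemma phi_div4: "4 dvd a \<Longrightarrow> 4 dvd b \<Longrightarrow> phi d (a div 4, b div 4) = phi d (a, b) / 4"
  unfolding phi_def by (auto simp: real_of_int_div field_simps)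

lemma zs_mul_comm: "zs_mul d a b = zs_mul d b a"
  unfolding zs_mul_def by (simp add: algebra_simps)

lemma quad_ids:
  fixes b D c e r n0 s :: real
  assumes h1: "4*b = c + e - 2*D" and h2: "4*r = c - e" and h3: "c*e = D^2 - 4*n0"
    and h4: "D^2 - s^2 = 3*n0"
  shows "b*(b+D) + n0 = r^2" "b*c + n0 = (b+r)^2" "(b+D)*c + n0 = (b+D+r)^2"
    "b*e + n0 = (b-r)^2" "(b+D)*e + n0 = (b+D-r)^2" "c*e + n0 = s^2"
proof -
  have c: "c = 2*b + D + 2*r" using h1 h2 by linarith
  have e: "e = 2*b + D - 2*r" using h1 h2 by linarith
  have key: "b*(b+D) + n0 = r^2"
  proof -
    have "(2*b + D + 2*r) * (2*b + D - 2*r) = D^2 - 4*n0" using h3 c e by simp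
    thus ?thesis by (simp add: algebra_simps power2_eq_square)
  qed
  show "b*(b+D) + n0 = r^2" by (rule key)
  show "b*c + n0 = (b+r)^2" unfolding c using key by (simp add: algebra_simps power2_eq_square)
  show "(b+D)*c + n0 = (b+D+r)^2" unfolding c using key by (simp add: algebra_simps power2_eq_square)
  show "b*e + n0 = (b-r)^2" unfolding e using key by (simp add: algebra_simps power2_eq_square)
  show "(b+D)*e + n0 = (b+D-r)^2" unfolding e using key by (simp add: algebra_simps power2_eq_square)
  show "c*e + n0 = s^2" using h3 h4 by simp
qed

lemma pell_parity:
  fixes d p q :: int
  assumes "d mod 4 = 2" "p^2 - d*q^2 = 1"
  shows "odd p" "even q"
proof -
  have de: "even d" using assms(1) by presburger
  have "p^2 = 1 + d*q^2" using assms(2) by simp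
  hence "odd (p^2)" using de by simp
  thus op: "odd p" by simp
  show "even q"
  proof (rule ccontr)
    assume "odd q"
    then obtain t where t: "q = 2*t+1" by (metis oddE)
    obtain s where s: "p = 2*s+1" using op by (metis oddE)
    have "(2*s+1)^2 - d*(2*t+1)^2 = 1" using assms(2) s t by simp
    hence "d = 4*(s^2+s) - 4*d*(t^2+t)" by (simp add: algebra_simps power2_eq_square)
    hence "d = 4*(s^2+s - d*(t^2+t))" by (simp add: algebra_simps)
    hence "d mod 4 = (4*(s^2+s - d*(t^2+t))) mod 4" by simp
    hence "d mod 4 = 0" by simp
    thus False using assms(1) by simp
  qed
qed

lemma div_conds:
  fixes g0 g1 h0 h1 D0 D1 p q d :: int
  assumes a1: "2 dvd g0 - h0" and a2: "2 dvd g1 - h1" and a3: "4 dvd g0 + h0" and a4: "4 dvd g1 + h1"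
    and a5: "4 dvd h0 - g0 - 2*D0" and a6: "4 dvd h1 - g1 - 2*D1"
    and op: "odd p" and eq: "even q" and ed: "even d"
  shows "4 dvd (h0*p + d*h1*(-q)) - (g0*p + d*g1*q) - 2*D0"
    "4 dvd (h0*(-q) + h1*p) - (g0*q + g1*p) - 2*D1"
    "4 dvd (g0*p + d*g1*q) + (h0*p + d*h1*(-q))"
    "4 dvd (g0*q + g1*p) + (h0*(-q) + h1*p)"
proof -
  have pm: "2 dvd p - 1" using op by simp
  have m22: "\<And>x y :: int. 2 dvd x \<Longrightarrow> 2 dvd y \<Longrightarrow> 4 dvd x*y"
    by (metis mult_dvd_mono numeral_Bit0 mult_2 add_One numeral_One one_add_one) 
  have hg0: "2 dvd h0 - g0" using a1 by (metis dvd_minus_iff minus_diff_eq)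
  have hg1: "2 dvd h1 - g1" using a2 by (metis dvd_minus_iff minus_diff_eq)
  have gh0: "2 dvd g0 + h0" using a3 by (meson dvd_trans dvd_refl mult_dvd_mono  numeral_Bit0 dvd_add_right_iff even_numeral)
  have gh1: "2 dvd g1 + h1" using a4 by (meson dvd_trans even_numeral)
  have dq: "4 dvd d*q" using ed eq m22 by blast
  have "(h0*p + d*h1*(-q)) - (g0*p + d*g1*q) - 2*D0 = (h0 - g0 - 2*D0) + (h0 - g0)*(p - 1) - (d*q)*(h1+g1)"
    by (simp add: algebra_simps)
  moreover have "4 dvd (h0 - g0)*(p - 1)" using m22 hg0 pm by blast
  ultimately show "4 dvd (h0*p + d*h1*(-q)) - (g0*p + d*g1*q) - 2*D0"
    using a5 dq by (metis dvd_add dvd_diff dvd_mult2)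
  have "(h0*(-q) + h1*p) - (g0*q + g1*p) - 2*D1 = (h1 - g1 - 2*D1) + (h1 - g1)*(p-1) - q*(g0+h0)"
    by (simp add: algebra_simps)
  moreover have "4 dvd (h1 - g1)*(p - 1)" using m22 hg1 pm by blast
  moreover have "4 dvd q*(g0+h0)" using m22 eq gh0 by blast
  ultimately show "4 dvd (h0*(-q) + h1*p) - (g0*q + g1*p) - 2*D1"
    using a6 by (metis dvd_add dvd_diff)
  have "(g0*p + d*g1*q) + (h0*p + d*h1*(-q)) = (g0 + h0) + (g0+h0)*(p-1) + (d*q)*(g1 - h1)"
    by (simp add: algebra_simps)
  moreover have "4 dvd (g0 + h0)*(p - 1)" using a3 by simp
  ultimately show "4 dvd (g0*p + d*g1*q) + (h0*p + d*h1*(-q))"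
    using a3 dq by (metis dvd_add dvd_mult2)
  have "(g0*q + g1*p) + (h0*(-q) + h1*p) = (g1 + h1) + (g1+h1)*(p-1) + q*(g0 - h0)"
    by (simp add: algebra_simps)
  moreover have "4 dvd (g1 + h1)*(p - 1)" using a4 by simp
  moreover have "4 dvd q*(g0 - h0)" using m22 eq a1 by blast
  ultimately show "4 dvd (g0*q + g1*p) + (h0*(-q) + h1*p)"
    using a4 by (metis dvd_add)
qed



lemma pell_inf:
  fixes d x y :: int
  assumes d4: "d mod 4 = 2" and dp: "d > 0" and e: "x^2 - d*y^2 = -1"
  shows "infinite {(p,q). p^2 - d*q^2 = 1 \<and> p > 0 \<and> q > 0}"
proof
  define U where "U = {(p,q). p^2 - d*q^2 = 1 \<and> p > 0 \<and> q > 0}"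
  assume fin: "finite {(p,q). p^2 - d*q^2 = 1 \<and> p > 0 \<and> q > 0}"
  hence finU: "finite U" unfolding U_def .
  have x0: "x \<noteq> 0"
  proof
    assume "x = 0"
    hence "d * y^2 = 1" using e by simp
    hence "d dvd 1" by (metis dvd_triv_left)
    hence "d = 1" using dp by simp
    thus False using d4 by simp
  qed
  have y0: "y \<noteq> 0"
  proof
    assume "y = 0"
    hence "x^2 = -1" using e by simp
    moreover have "x^2 \<ge> 0" by simp
    ultimately show False by linarith
  qed
  define P0 where "P0 = 2*x^2 + 1"
  define Q0 where "Q0 = 2*\<bar>x\<bar>*\<bar>y\<bar>"
  have P0p: "P0 > 1" unfolding P0_def using x0 by simp
  have Q0p: "Q0 > 0" unfolding Q0_def using x0 y0 by simp
  have dy: "d*y^2 = x^2 + 1" using e by simp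
  have Q0sq: "Q0^2 = 4*x^2*y^2" unfolding Q0_def by (simp add: power_mult_distrib)
  have pell0: "P0^2 - d*Q0^2 = 1"
  proof -
    have "P0^2 - d*Q0^2 = 4*x^4 + 4*x^2 + 1 - 4*x^2*(d*y^2)"
      unfolding P0_def Q0sq by (simp add: algebra_simps power2_eq_square power4_eq_xxxx)
    also have "\<dots> = 1" unfolding dy by (simp add: algebra_simps power2_eq_square power4_eq_xxxx)
    finally show ?thesis .
  qed
  have U0: "(P0, Q0) \<in> U" unfolding U_def using pell0 P0p Q0p by simp
  have step: "\<And>p q. (p,q) \<in> U \<Longrightarrow> (p*P0 + d*q*Q0, p*Q0 + q*P0) \<in> U \<and> p*P0 + d*q*Q0 > p"
  proof -
    fix p q assume "(p,q) \<in> U"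
    hence pq: "p^2 - d*q^2 = 1" "p > 0" "q > 0" unfolding U_def by auto
    have "(p*P0 + d*q*Q0)^2 - d*(p*Q0 + q*P0)^2 = (p^2 - d*q^2)*(P0^2 - d*Q0^2)"
      by (simp add: algebra_simps power2_eq_square)
    also have "\<dots> = 1" using pq pell0 by simp
    finally have 1: "(p*P0 + d*q*Q0)^2 - d*(p*Q0 + q*P0)^2 = 1" .
    have 2: "p*P0 > p" using pq P0p by simp
    have 3: "d*q*Q0 > 0" using dp pq Q0p by simp
    have 4: "p*Q0 + q*P0 > 0" using pq P0p Q0p by (simp add: add_pos_pos)
    show "(p*P0 + d*q*Q0, p*Q0 + q*P0) \<in> U \<and> p*P0 + d*q*Q0 > p"
    proof -
      have 5: "p*P0 + d*q*Q0 > p" using 2 3 by linarith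
      have 6: "p*P0 + d*q*Q0 > 0" using 5 pq(2) by linarith
      show ?thesis unfolding U_def using 1 4 5 6 by simp
    qed
  qed
  define M where "M = Max (fst ` U)"
  have "M \<in> fst ` U" unfolding M_def using finU U0 by (intro Max_in) auto
  then obtain p q where pqU: "(p,q) \<in> U" and pM: "p = M" by force
  from step[OF pqU] have "p*P0 + d*q*Q0 \<in> fst ` U" "p*P0 + d*q*Q0 > p" by force+
  moreover have "p*P0 + d*q*Q0 \<le> M" using calculation(1) finU unfolding M_def by simp
  ultimately show False using pM by simp
qed



lemma sq_helper:
  assumes "d mod 4 = 2" "d > 0" "phi d x * phi d y + phi d n = (phi d t)^2"
  shows "zs_is_square d (zs_add (zs_mul d x y) n)"
  unfolding zs_is_square_def
proof
  show "zs_add (zs_mul d x y) n = zs_mul d t t"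
    using assms by (intro phi_inj[OF assms(1,2)]) (simp add: phi_add phi_mul power2_eq_square)
qed

lemma realscale: "x*y + n0 = (t::real)^2 \<Longrightarrow> (W*x)*(W*y) + W^2*n0 = (W*t)^2"
proof -
  assume "x*y + n0 = t^2"
  hence "W^2*(x*y + n0) = W^2*t^2" by simp
  thus ?thesis by (simp add: algebra_simps power2_eq_square)
qed

lemma phi_zero: "phi d (0,0) = 0" unfolding phi_def by simp

lemma generic:
  fixes d x y :: int and n n0 D s g h w :: zsqrt
  assumes d4: "d mod 4 = 2" and dp: "d > 0"
    and pell: "x^2 - d*y^2 = -1"
    and rel1: "(phi d D)^2 - (phi d s)^2 = 3 * phi d n0"
    and rel2: "phi d g * phi d h = 4 * phi d n0 - (phi d D)^2"
    and c1: "2 dvd fst g - fst h" "2 dvd snd g - snd h"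
    and c2: "4 dvd fst g + fst h" "4 dvd snd g + snd h"
    and c3: "4 dvd fst h - fst g - 2*fst D" "4 dvd snd h - snd g - 2*snd D"
    and nzg: "phi d g \<noteq> 0" and nzh: "phi d h \<noteq> 0" and nzD: "phi d D \<noteq> 0"
    and nzw: "phi d w \<noteq> 0"
    and nn: "phi d n = (phi d w)^2 * phi d n0"
  shows "infinite {S. D_quadruple d n S}"
proof
  assume finQ: "finite {S. D_quadruple d n S}"
  define U where "U = {(p,q). p^2 - d*q^2 = 1 \<and> p > 0 \<and> q > 0}"
  have infU: "infinite U" unfolding U_def using pell_inf[OF d4 dp pell] .
  define G where "G = phi d g"
  define H where "H = phi d h"
  define Dl where "Dl = phi d D"
  define W where "W = phi d w"
  define gz where "gz z = zs_mul d g z" for z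
  define hz where "hz z = zs_mul d h (zconj z)" for z
  define bb where "bb z = ((fst (hz z) - fst (gz z) - 2*fst D) div 4, (snd (hz z) - snd (gz z) - 2*snd D) div 4)" for z
  define rr where "rr z = ((fst (gz z) + fst (hz z)) div 4, (snd (gz z) + snd (hz z)) div 4)" for z
  define aa where "aa z = zs_add (bb z) D" for z
  define el where "el z = zs_mul d w (zneg (gz z))" for z
  define SS where "SS z = {zs_mul d w (aa z), zs_mul d w (bb z), zs_mul d w (hz z), el z}" for z
  define pA where "pA = [:H, 2*Dl, -G:]"
  define pB where "pB = [:H, -2*Dl, -G:]"
  define pC where "pC = [:4*H:]"
  define pE where "pE = [:0, 0, -4*G:]"
  define ps where "ps = [pA, pB, pC, pE, pA - pB, pA - pC, pA - pE, pB - pC, pB - pE, pC - pE]"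
  define Rset where "Rset = (\<Union>p\<in>set ps. {z. poly p z = 0})"
  have d0: "d \<ge> 0" using dp by simp
  have ed: "even d" using d4 by presburger
  have psnz: "\<forall>p\<in>set ps. p \<noteq> 0"
    unfolding ps_def pA_def pB_def pC_def pE_def using nzg nzh nzD by (simp add: G_def H_def Dl_def)
  have finR: "finite Rset" unfolding Rset_def using psnz poly_roots_finite by blast
  have injphi: "inj (phi d)" by (rule injI) (rule phi_inj[OF d4 dp])
  have finB: "finite (phi d -` Rset)" using finR injphi by (simp add: finite_vimageI)
  define U' where "U' = U - phi d -` Rset"
  have infU': "infinite U'" unfolding U'_def using infU finB by simp
  have facts: "phi d z > 0 \<and> phi d (zconj z) * phi d z = 1 \<and>
      phi d (gz z) = G * phi d z \<and> phi d (hz z) = H * phi d (zconj z) \<and>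
      phi d (bb z) = (phi d (hz z) - phi d (gz z) - 2*Dl)/4 \<and>
      phi d (rr z) = (phi d (gz z) + phi d (hz z))/4 \<and>
      phi d (aa z) = phi d (bb z) + Dl" if zU: "z \<in> U" for z
  proof -
    obtain p q where z: "z = (p,q)" by fastforce
    have pq: "p^2 - d*q^2 = 1" "p > 0" "q > 0" using zU unfolding U_def z by auto
    have op: "odd p" and eq: "even q" using pell_parity[OF d4 pq(1)] by auto
    have Zp: "phi d z > 0" unfolding z phi_def using pq(2,3) dp by (simp add: add_pos_pos)
    have cz: "zs_mul d (zconj z) z = (1, 0)" unfolding z zconj_def zs_mul_def using pq(1)
      by (simp add: power2_eq_square algebra_simps)
    have cz1: "phi d (zconj z) * phi d z = 1" using phi_mul[OF d0, of "zconj z" z] cz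
      by (simp add: phi_def)
    have g1: "phi d (gz z) = G * phi d z" unfolding gz_def G_def by (simp add: phi_mul[OF d0])
    have h1: "phi d (hz z) = H * phi d (zconj z)" unfolding hz_def H_def by (simp add: phi_mul[OF d0])
    note dc = div_conds[OF c1 c2 c3 op eq ed]
    have dv1: "4 dvd fst (hz z) - fst (gz z) - 2*fst D" using dc(1)
      unfolding hz_def gz_def z zconj_def zs_mul_def by simp
    have dv2: "4 dvd snd (hz z) - snd (gz z) - 2*snd D" using dc(2)
      unfolding hz_def gz_def z zconj_def zs_mul_def by simp
    have dv3: "4 dvd fst (gz z) + fst (hz z)" using dc(3)
      unfolding hz_def gz_def z zconj_def zs_mul_def by simp
    have dv4: "4 dvd snd (gz z) + snd (hz z)" using dc(4)
      unfolding hz_def gz_def z zconj_def zs_mul_def by simp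
    have b1: "phi d (bb z) = (phi d (hz z) - phi d (gz z) - 2*Dl)/4"
      unfolding bb_def phi_div4[OF dv1 dv2] Dl_def by (simp add: phi_def algebra_simps)
    have r1: "phi d (rr z) = (phi d (gz z) + phi d (hz z))/4"
      unfolding rr_def phi_div4[OF dv3 dv4] by (simp add: phi_def algebra_simps)
    have a1: "phi d (aa z) = phi d (bb z) + Dl" unfolding aa_def Dl_def by (simp add: phi_add)
    show ?thesis using Zp cz1 g1 h1 b1 r1 a1 by blast
  qed
  have quad: "D_quadruple d n (SS z)" if zU: "z \<in> U'" for z
  proof -
    have zU0: "z \<in> U" and zR: "phi d z \<notin> Rset" using zU unfolding U'_def by auto
    define Z where "Z = phi d z"
    define Zc where "Zc = phi d (zconj z)"
    define c where "c = phi d (hz z)"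
    define e where "e = - phi d (gz z)"
    define b where "b = phi d (bb z)"
    define r where "r = phi d (rr z)"
    have F: "Z > 0" "Zc * Z = 1" "c = H * Zc" "e = - G * Z" "b = (c + e - 2*Dl)/4"
       "r = (c - e)/4" "phi d (aa z) = b + Dl"
      using facts[OF zU0] unfolding Z_def Zc_def c_def e_def b_def r_def by auto
    have ce: "c*e = Dl^2 - 4*phi d n0"
    proof -
      have "c*e = - (G*H)*(Zc*Z)" using F by (simp add: algebra_simps)
      also have "\<dots> = Dl^2 - 4*phi d n0" using F(2) rel2 unfolding G_def H_def Dl_def by simp
      finally show ?thesis .
    qed
    have h1: "4*b = c + e - 2*Dl" using F by simp
    have h2: "4*r = c - e" using F by simp
    note Q = quad_ids[OF h1 h2 ce rel1[folded Dl_def]]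
    have Zc: "Zc = 1/Z" using F(1,2) by (simp add: field_simps)
    have Zcc: "Z*c = H" using F(2,3) by (simp add: algebra_simps)
    have vB: "4*Z*b = poly pB Z"
    proof -
      have "4*Z*b = Z*(4*b)" by simp
      also have "\<dots> = Z*(c + e - 2*Dl)" using h1 by simp
      also have "\<dots> = Z*c + Z*e - 2*Dl*Z" by (simp add: algebra_simps)
      also have "\<dots> = poly pB Z" unfolding pB_def using Zcc F(4) by (simp add: algebra_simps)
      finally show ?thesis .
    qed
    have vA: "4*Z*(b+Dl) = poly pA Z"
    proof -
      have "4*Z*(b+Dl) = Z*(4*b) + 4*Z*Dl" by (simp add: algebra_simps)
      also have "\<dots> = Z*(c + e - 2*Dl) + 4*Z*Dl" using h1 by simp
      also have "\<dots> = Z*c + Z*e + 2*Dl*Z" by (simp add: algebra_simps)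
      also have "\<dots> = poly pA Z" unfolding pA_def using Zcc F(4) by (simp add: algebra_simps)
      finally show ?thesis .
    qed
    have vC: "4*Z*c = poly pC Z" unfolding pC_def using Zcc by simp
    have vE: "4*Z*e = poly pE Z" unfolding pE_def using F by (simp add: field_simps)
    have nr: "\<forall>p\<in>set ps. poly p Z \<noteq> 0" using zR unfolding Rset_def Z_def by auto
    have Z0: "Z \<noteq> 0" using F(1) by simp
    have ne: "\<And>u v p. 4*Z*u = poly p Z \<Longrightarrow> p \<in> set ps \<Longrightarrow> u \<noteq> 0"
      using nr Z0 by fastforce
    have nd: "\<And>u v p q. 4*Z*u = poly p Z \<Longrightarrow> 4*Z*v = poly q Z \<Longrightarrow> p - q \<in> set ps \<Longrightarrow> u \<noteq> v"
    proof -
      fix u v p q assume "4*Z*u = poly p Z" "4*Z*v = poly q Z" "p - q \<in> set ps"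
      hence "poly (p - q) Z \<noteq> 0" using nr by blast
      hence "4*Z*u \<noteq> 4*Z*v" using \<open>4*Z*u = poly p Z\<close> \<open>4*Z*v = poly q Z\<close> by simp
      thus "u \<noteq> v" by auto
    qed
    have inps: "pA \<in> set ps" "pB \<in> set ps" "pC \<in> set ps" "pE \<in> set ps" "pA - pB \<in> set ps"
      "pA - pC \<in> set ps" "pA - pE \<in> set ps" "pB - pC \<in> set ps" "pB - pE \<in> set ps"
      "pC - pE \<in> set ps" unfolding ps_def by simp_all
    have n1: "b + Dl \<noteq> 0" "b \<noteq> 0" "c \<noteq> 0" "e \<noteq> 0"
      using ne[OF vA inps(1)] ne[OF vB inps(2)] ne[OF vC inps(3)] ne[OF vE inps(4)] by auto
    have n2: "b + Dl \<noteq> b" "b + Dl \<noteq> c" "b + Dl \<noteq> e" "b \<noteq> c" "b \<noteq> e" "c \<noteq> e"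
      using nd[OF vA vB inps(5)] nd[OF vA vC inps(6)] nd[OF vA vE inps(7)]
        nd[OF vB vC inps(8)] nd[OF vB vE inps(9)] nd[OF vC vE inps(10)] by auto
    define A1 where "A1 = zs_mul d w (aa z)"
    define B1 where "B1 = zs_mul d w (bb z)"
    define C1 where "C1 = zs_mul d w (hz z)"
    define E1 where "E1 = el z"
    have pA1: "phi d A1 = W*(b+Dl)" unfolding A1_def W_def using F(7) by (simp add: phi_mul[OF d0])
    have pB1: "phi d B1 = W*b" unfolding B1_def W_def b_def by (simp add: phi_mul[OF d0])
    have pC1: "phi d C1 = W*c" unfolding C1_def W_def c_def by (simp add: phi_mul[OF d0])
    have pE1: "phi d E1 = W*e" unfolding E1_def el_def W_def e_def by (simp add: phi_mul[OF d0] phi_neg)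
    have W0: "W \<noteq> 0" using nzw W_def by simp
    have dist: "A1 \<noteq> B1" "A1 \<noteq> C1" "A1 \<noteq> E1" "B1 \<noteq> C1" "B1 \<noteq> E1" "C1 \<noteq> E1"
      using n2 pA1 pB1 pC1 pE1 W0 by (metis mult_left_cancel)+
    have nz0: "A1 \<noteq> (0,0)" "B1 \<noteq> (0,0)" "C1 \<noteq> (0,0)" "E1 \<noteq> (0,0)"
      using n1 pA1 pB1 pC1 pE1 W0 phi_zero[of d] by (metis mult_eq_0_iff)+
    have nnW: "phi d n = W^2 * phi d n0" using nn W_def by simp
    have wr: "\<And>t. phi d (zs_mul d w t) = W * phi d t" unfolding W_def by (simp add: phi_mul[OF d0])
    have sqs: "zs_is_square d (zs_add (zs_mul d B1 A1) n)"
      "zs_is_square d (zs_add (zs_mul d B1 C1) n)"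
      "zs_is_square d (zs_add (zs_mul d A1 C1) n)"
      "zs_is_square d (zs_add (zs_mul d B1 E1) n)"
      "zs_is_square d (zs_add (zs_mul d A1 E1) n)"
      "zs_is_square d (zs_add (zs_mul d C1 E1) n)"
    proof -
      show "zs_is_square d (zs_add (zs_mul d B1 A1) n)"
        by (rule sq_helper[OF d4 dp, where t="zs_mul d w (rr z)"])
          (simp add: pA1 pB1 nnW wr realscale Q(1) r_def[symmetric])
      show "zs_is_square d (zs_add (zs_mul d B1 C1) n)"
        by (rule sq_helper[OF d4 dp, where t="zs_mul d w (zs_add (bb z) (rr z))"])
          (simp add: pC1 pB1 nnW wr realscale Q(2) r_def[symmetric] b_def[symmetric] phi_add)
      show "zs_is_square d (zs_add (zs_mul d A1 C1) n)"
        by (rule sq_helper[OF d4 dp, where t="zs_mul d w (zs_add (aa z) (rr z))"])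
          (simp add: pC1 pA1 nnW wr realscale Q(3) r_def[symmetric] F(7) phi_add)
      show "zs_is_square d (zs_add (zs_mul d B1 E1) n)"
        by (rule sq_helper[OF d4 dp, where t="zs_mul d w (zs_add (bb z) (zneg (rr z)))"])
          (simp add: pE1 pB1 nnW wr realscale Q(4)[unfolded diff_conv_add_uminus] r_def[symmetric] b_def[symmetric] phi_add phi_neg)
      show "zs_is_square d (zs_add (zs_mul d A1 E1) n)"
        by (rule sq_helper[OF d4 dp, where t="zs_mul d w (zs_add (aa z) (zneg (rr z)))"])
          (simp add: pE1 pA1 nnW wr realscale Q(5)[unfolded diff_conv_add_uminus] r_def[symmetric] F(7) phi_add phi_neg)
      show "zs_is_square d (zs_add (zs_mul d C1 E1) n)"
        by (rule sq_helper[OF d4 dp, where t="zs_mul d w s"])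
          (simp add: pE1 pC1 nnW wr realscale Q(6))
    qed
    have sym: "zs_is_square d (zs_add (zs_mul d u v) n) \<Longrightarrow> zs_is_square d (zs_add (zs_mul d v u) n)" for u v
      by (simp add: zs_mul_comm)
    have SSeq: "SS z = {A1, B1, C1, E1}" unfolding SS_def A1_def B1_def C1_def E1_def by simp
    show ?thesis unfolding D_quadruple_def SSeq
      using dist nz0 sqs sym by auto
  qed
  have elinj: "inj_on el U'"
  proof (rule inj_onI)
    fix z1 z2 assume z1: "z1 \<in> U'" and z2: "z2 \<in> U'" and eq: "el z1 = el z2"
    have "phi d (el z1) = - W * G * phi d z1" unfolding el_def W_def G_def gz_def
      by (simp add: phi_mul[OF d0] phi_neg)
    moreover have "phi d (el z2) = - W * G * phi d z2" unfolding el_def W_def G_def gz_def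
      by (simp add: phi_mul[OF d0] phi_neg)
    ultimately have "phi d z1 = phi d z2" using eq nzw nzg W_def G_def by simp
    thus "z1 = z2" by (rule phi_inj[OF d4 dp])
  qed
  have infE: "infinite (el ` U')" using elinj infU' finite_imageD by blast
  have sub: "SS ` U' \<subseteq> {S. D_quadruple d n S}" using quad by blast
  have finF: "finite (SS ` U')" using finite_subset[OF sub finQ] .
  have finU: "finite (\<Union> (SS ` U'))" using finF unfolding SS_def by auto
  have "el ` U' \<subseteq> \<Union> (SS ` U')" unfolding SS_def by auto
  hence "finite (el ` U')" using finU finite_subset by blast
  thus False using infE by simp
qed



definition good :: "int \<Rightarrow> zsqrt \<Rightarrow> zsqrt \<Rightarrow> zsqrt \<Rightarrow> zsqrt \<Rightarrow> zsqrt \<Rightarrow> bool" where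
  "good d n0 D s g h \<longleftrightarrow> (phi d D)^2 - (phi d s)^2 = 3 * phi d n0 \<and>
     phi d g * phi d h = 4 * phi d n0 - (phi d D)^2 \<and>
     2 dvd fst g - fst h \<and> 2 dvd snd g - snd h \<and> 4 dvd fst g + fst h \<and> 4 dvd snd g + snd h \<and>
     4 dvd fst h - fst g - 2*fst D \<and> 4 dvd snd h - snd g - 2*snd D \<and>
     phi d g \<noteq> 0 \<and> phi d h \<noteq> 0 \<and> phi d D \<noteq> 0"

lemma phi_nz: "d mod 4 = 2 \<Longrightarrow> d > 0 \<Longrightarrow> fst x \<noteq> 0 \<or> snd x \<noteq> 0 \<Longrightarrow> phi d x \<noteq> 0"
  using phi_inj[of d x "(0,0)"] phi_zero[of d] by auto

lemma ne42: "(x::int) = 4*q + 2 \<Longrightarrow> x \<noteq> 0" by presburger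
lemma ne84: "(x::int) = 8*q + 4 \<Longrightarrow> x \<noteq> 0" by presburger
lemma ne168: "(x::int) = 16*q + 8 \<Longrightarrow> x \<noteq> 0" by presburger

lemma good_intro:
  assumes d4: "d mod 4 = 2" and dp: "d > 0"
    and r1: "zs_mul d D D = zs_add (zs_mul d s s) (3*fst n0, 3*snd n0)"
    and r2: "phi d g * phi d h = phi d (4*fst n0 - fst (zs_mul d D D), 4*snd n0 - snd (zs_mul d D D))"
    and c1: "2 dvd fst g - fst h" "2 dvd snd g - snd h"
    and c2: "4 dvd fst g + fst h" "4 dvd snd g + snd h"
    and c3: "4 dvd fst h - fst g - 2*fst D" "4 dvd snd h - snd g - 2*snd D"
    and gnz: "fst g \<noteq> 0 \<or> snd g \<noteq> 0" and Dnz: "fst D \<noteq> 0 \<or> snd D \<noteq> 0"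
    and Tnz: "4*fst n0 - fst (zs_mul d D D) \<noteq> 0 \<or> 4*snd n0 - snd (zs_mul d D D) \<noteq> 0"
  shows "good d n0 D s g h"
proof -
  have d0: "d \<ge> 0" using dp by simp
  have DD: "phi d (zs_mul d D D) = (phi d D)^2" by (simp add: phi_mul[OF d0] power2_eq_square)
  have ss: "phi d (zs_mul d s s) = (phi d s)^2" by (simp add: phi_mul[OF d0] power2_eq_square)
  have a1: "(phi d D)^2 - (phi d s)^2 = 3 * phi d n0"
  proof -
    have "phi d (zs_mul d D D) = phi d (zs_mul d s s) + phi d (3*fst n0, 3*snd n0)"
      using r1 by (simp add: phi_add)
    moreover have "phi d (3*fst n0, 3*snd n0) = 3*phi d n0" unfolding phi_def by (simp add: algebra_simps)
    ultimately show ?thesis using DD ss by simp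
  qed
  have Tp: "phi d (4*fst n0 - fst (zs_mul d D D), 4*snd n0 - snd (zs_mul d D D)) = 4*phi d n0 - (phi d D)^2"
    using DD unfolding phi_def by (simp add: algebra_simps)
  have a2: "phi d g * phi d h = 4 * phi d n0 - (phi d D)^2" using r2 Tp by simp
  have Tn: "phi d (4*fst n0 - fst (zs_mul d D D), 4*snd n0 - snd (zs_mul d D D)) \<noteq> 0"
    using phi_nz[OF d4 dp] Tnz by simp
  have hn: "phi d h \<noteq> 0" using r2 Tn by auto
  show ?thesis unfolding good_def using a1 a2 c1 c2 c3 hn phi_nz[OF d4 dp gnz] phi_nz[OF d4 dp Dnz] by simp
qed

lemma caseA:
  fixes m1 k1 X1 Y1 e :: int
  assumes rel: "(4*X1)^2 - (8*e+2)*(2*Y1+1)^2 = 6" and dp: "8*e+2 > 0"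
  shows "\<exists>D s g h. good (8*e+2) (4*(2*m1)+2, 4*(2*k1+1)) D s g h"
proof -
  define n0 where "n0 = (4*(2*m1)+2, 4*(2*k1+1))"
  define d where "d = 8*e+2"
  define D where "D = ((-2) + (-4)*k1 + (-8)*e + (-16)*e*k1 + (-4)*Y1 + (-8)*Y1*k1 + (-16)*Y1*e + (-32)*Y1*e*k1 + (4)*X1 + (8)*X1*m1, (-2)*m1 + (-4)*Y1*m1 + (4)*X1 + (8)*X1*k1)"
  define s where "s = ((-2) + (-4)*k1 + (-8)*e + (-16)*e*k1 + (-4)*Y1 + (-8)*Y1*k1 + (-16)*Y1*e + (-32)*Y1*e*k1 + (8)*X1*m1, (-1) + (-2)*m1 + (-2)*Y1 + (-4)*Y1*m1 + (4)*X1 + (8)*X1*k1)"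
  define g where "g = (2::int, 0::int)"
  define h where "h = ((2) + (-8)*k1 + (-8)*k1*k1 + (16)*m1 + (-4)*m1*m1 + (-16)*e + (-64)*e*k1 + (-64)*e*k1*k1 + (-16)*e*m1*m1 + (-32)*e*e + (-128)*e*e*k1 + (-128)*e*e*k1*k1 + (-8)*Y1 + (-32)*Y1*k1 + (-32)*Y1*k1*k1 + (-16)*Y1*m1*m1 + (-64)*Y1*e + (-256)*Y1*e*k1 + (-256)*Y1*e*k1*k1 + (-64)*Y1*e*m1*m1 + (-128)*Y1*e*e + (-512)*Y1*e*e*k1 + (-512)*Y1*e*e*k1*k1 + (-8)*Y1*Y1 + (-32)*Y1*Y1*k1 + (-32)*Y1*Y1*k1*k1 + (-16)*Y1*Y1*m1*m1 + (-64)*Y1*Y1*e + (-256)*Y1*Y1*e*k1 + (-256)*Y1*Y1*e*k1*k1 + (-64)*Y1*Y1*e*m1*m1 + (-128)*Y1*Y1*e*e + (-512)*Y1*Y1*e*e*k1 + (-512)*Y1*Y1*e*e*k1*k1 + (8)*X1 + (16)*X1*k1 + (32)*X1*m1 + (64)*X1*m1*k1 + (32)*X1*e + (64)*X1*e*k1 + (128)*X1*e*m1 + (256)*X1*e*m1*k1 + (16)*X1*Y1 + (32)*X1*Y1*k1 + (64)*X1*Y1*m1 + (128)*X1*Y1*m1*k1 + (64)*X1*Y1*e + (128)*X1*Y1*e*k1 + (256)*X1*Y1*e*m1 + (512)*X1*Y1*e*m1*k1 + (-24)*X1*X1 + (-64)*X1*X1*k1 + (-64)*X1*X1*k1*k1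 + (-32)*X1*X1*m1 + (-32)*X1*X1*m1*m1 + (-64)*X1*X1*e + (-256)*X1*X1*e*k1 + (-256)*X1*X1*e*k1*k1, (8) + (16)*k1 + (-4)*m1 + (-8)*m1*k1 + (-16)*e*m1 + (-32)*e*m1*k1 + (-16)*Y1*m1 + (-32)*Y1*m1*k1 + (-64)*Y1*e*m1 + (-128)*Y1*e*m1*k1 + (-16)*Y1*Y1*m1 + (-32)*Y1*Y1*m1*k1 + (-64)*Y1*Y1*e*m1 + (-128)*Y1*Y1*e*m1*k1 + (8)*X1 + (32)*X1*k1 + (32)*X1*k1*k1 + (8)*X1*m1 + (16)*X1*m1*m1 + (32)*X1*e + (128)*X1*e*k1 + (128)*X1*e*k1*k1 + (16)*X1*Y1 + (64)*X1*Y1*k1 + (64)*X1*Y1*k1*k1 + (16)*X1*Y1*m1 + (32)*X1*Y1*m1*m1 + (64)*X1*Y1*e + (256)*X1*Y1*e*k1 + (256)*X1*Y1*e*k1*k1 + (-16)*X1*X1 + (-32)*X1*X1*k1 + (-32)*X1*X1*m1 + (-64)*X1*X1*m1*k1)"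
  have r1: "zs_mul d D D = zs_add (zs_mul d s s) (3*fst n0, 3*snd n0)"
  proof (rule prod_eqI)
    have "fst (zs_mul d D D) - fst (zs_add (zs_mul d s s) (3*fst n0, 3*snd n0)) = (2*(2*m1)+1) * ((4*X1)^2 - (8*e+2)*(2*Y1+1)^2 - 6)"
      unfolding zs_mul_def zs_add_def D_def s_def d_def n0_def fst_conv snd_conv by (simp add: algebra_simps power2_eq_square)
    thus "fst (zs_mul d D D) = fst (zs_add (zs_mul d s s) (3*fst n0, 3*snd n0))" using rel by simp
    have "snd (zs_mul d D D) - snd (zs_add (zs_mul d s s) (3*fst n0, 3*snd n0)) = (2*(2*k1+1)) * ((4*X1)^2 - (8*e+2)*(2*Y1+1)^2 - 6)"
      unfolding zs_mul_def zs_add_def D_def s_def d_def n0_def fst_conv snd_conv by (simp add: algebra_simps power2_eq_square)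
    thus "snd (zs_mul d D D) = snd (zs_add (zs_mul d s s) (3*fst n0, 3*snd n0))" using rel by simp
  qed
  have r2: "zs_mul d g h = (4*fst n0 - fst (zs_mul d D D), 4*snd n0 - snd (zs_mul d D D))"
    unfolding zs_mul_def g_def h_def D_def d_def n0_def fst_conv snd_conv by (simp add: algebra_simps power2_eq_square)
  have c1: "fst g - fst h = 2*((4)*k1 + (4)*k1*k1 + (-8)*m1 + (2)*m1*m1 + (8)*e + (32)*e*k1 + (32)*e*k1*k1 + (8)*e*m1*m1 + (16)*e*e + (64)*e*e*k1 + (64)*e*e*k1*k1 + (4)*Y1 + (16)*Y1*k1 + (16)*Y1*k1*k1 + (8)*Y1*m1*m1 + (32)*Y1*e + (128)*Y1*e*k1 + (128)*Y1*e*k1*k1 + (32)*Y1*e*m1*m1 + (64)*Y1*e*e + (256)*Y1*e*e*k1 + (256)*Y1*e*e*k1*k1 + (4)*Y1*Y1 + (16)*Y1*Y1*k1 + (16)*Y1*Y1*k1*k1 + (8)*Y1*Y1*m1*m1 + (32)*Y1*Y1*e + (128)*Y1*Y1*e*k1 + (128)*Y1*Y1*e*k1*k1 + (32)*Y1*Y1*e*m1*m1 + (64)*Y1*Y1*e*e + (256)*Y1*Y1*e*e*k1 + (256)*Y1*Y1*e*e*k1*k1 + (-4)*X1 + (-8)*X1*k1 + (-16)*X1*m1 + (-32)*X1*m1*k1 + (-16)*X1*e + (-32)*X1*e*k1 + (-64)*X1*e*m1 + (-128)*X1*e*m1*k1 + (-8)*X1*Y1 + (-16)*X1*Y1*k1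 + (-32)*X1*Y1*m1 + (-64)*X1*Y1*m1*k1 + (-32)*X1*Y1*e + (-64)*X1*Y1*e*k1 + (-128)*X1*Y1*e*m1 + (-256)*X1*Y1*e*m1*k1 + (12)*X1*X1 + (32)*X1*X1*k1 + (32)*X1*X1*k1*k1 + (16)*X1*X1*m1 + (16)*X1*X1*m1*m1 + (32)*X1*X1*e + (128)*X1*X1*e*k1 + (128)*X1*X1*e*k1*k1)" "snd g - snd h = 2*((-4) + (-8)*k1 + (2)*m1 + (4)*m1*k1 + (8)*e*m1 + (16)*e*m1*k1 + (8)*Y1*m1 + (16)*Y1*m1*k1 + (32)*Y1*e*m1 + (64)*Y1*e*m1*k1 + (8)*Y1*Y1*m1 + (16)*Y1*Y1*m1*k1 + (32)*Y1*Y1*e*m1 + (64)*Y1*Y1*e*m1*k1 + (-4)*X1 + (-16)*X1*k1 + (-16)*X1*k1*k1 + (-4)*X1*m1 + (-8)*X1*m1*m1 + (-16)*X1*e + (-64)*X1*e*k1 + (-64)*X1*e*k1*k1 + (-8)*X1*Y1 + (-32)*X1*Y1*k1 + (-32)*X1*Y1*k1*k1 + (-8)*X1*Y1*m1 + (-16)*X1*Y1*m1*m1 + (-32)*X1*Y1*e + (-128)*X1*Y1*e*k1 + (-128)*X1*Y1*e*k1*k1 + (8)*X1*X1 + (16)*X1*X1*k1 + (16)*X1*X1*m1 + (32)*X1*X1*m1*k1)"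
    unfolding g_def h_def fst_conv snd_conv by (simp_all add: algebra_simps power2_eq_square)
  have c2: "fst g + fst h = 4*((1) + (-2)*k1 + (-2)*k1*k1 + (4)*m1 + (-1)*m1*m1 + (-4)*e + (-16)*e*k1 + (-16)*e*k1*k1 + (-4)*e*m1*m1 + (-8)*e*e + (-32)*e*e*k1 + (-32)*e*e*k1*k1 + (-2)*Y1 + (-8)*Y1*k1 + (-8)*Y1*k1*k1 + (-4)*Y1*m1*m1 + (-16)*Y1*e + (-64)*Y1*e*k1 + (-64)*Y1*e*k1*k1 + (-16)*Y1*e*m1*m1 + (-32)*Y1*e*e + (-128)*Y1*e*e*k1 + (-128)*Y1*e*e*k1*k1 + (-2)*Y1*Y1 + (-8)*Y1*Y1*k1 + (-8)*Y1*Y1*k1*k1 + (-4)*Y1*Y1*m1*m1 + (-16)*Y1*Y1*e + (-64)*Y1*Y1*e*k1 + (-64)*Y1*Y1*e*k1*k1 + (-16)*Y1*Y1*e*m1*m1 + (-32)*Y1*Y1*e*e + (-128)*Y1*Y1*e*e*k1 + (-128)*Y1*Y1*e*e*k1*k1 + (2)*X1 + (4)*X1*k1 + (8)*X1*m1 + (16)*X1*m1*k1 + (8)*X1*e + (16)*X1*e*k1 + (32)*X1*e*m1 + (64)*X1*e*m1*k1 + (4)*X1*Y1 + (8)*X1*Y1*k1 + (16)*X1*Y1*m1 + (32)*X1*Y1*m1*k1 + (16)*X1*Y1*e + (32)*X1*Y1*e*k1 + (64)*X1*Y1*e*m1 + (128)*X1*Y1*e*m1*k1 + (-6)*X1*X1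 + (-16)*X1*X1*k1 + (-16)*X1*X1*k1*k1 + (-8)*X1*X1*m1 + (-8)*X1*X1*m1*m1 + (-16)*X1*X1*e + (-64)*X1*X1*e*k1 + (-64)*X1*X1*e*k1*k1)" "snd g + snd h = 4*((2) + (4)*k1 + (-1)*m1 + (-2)*m1*k1 + (-4)*e*m1 + (-8)*e*m1*k1 + (-4)*Y1*m1 + (-8)*Y1*m1*k1 + (-16)*Y1*e*m1 + (-32)*Y1*e*m1*k1 + (-4)*Y1*Y1*m1 + (-8)*Y1*Y1*m1*k1 + (-16)*Y1*Y1*e*m1 + (-32)*Y1*Y1*e*m1*k1 + (2)*X1 + (8)*X1*k1 + (8)*X1*k1*k1 + (2)*X1*m1 + (4)*X1*m1*m1 + (8)*X1*e + (32)*X1*e*k1 + (32)*X1*e*k1*k1 + (4)*X1*Y1 + (16)*X1*Y1*k1 + (16)*X1*Y1*k1*k1 + (4)*X1*Y1*m1 + (8)*X1*Y1*m1*m1 + (16)*X1*Y1*e + (64)*X1*Y1*e*k1 + (64)*X1*Y1*e*k1*k1 + (-4)*X1*X1 + (-8)*X1*X1*k1 + (-8)*X1*X1*m1 + (-16)*X1*X1*m1*k1)"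
    unfolding g_def h_def fst_conv snd_conv by (simp_all add: algebra_simps power2_eq_square)
  have c3: "fst h - fst g - 2*fst D = 4*((1) + (-2)*k1*k1 + (4)*m1 + (-1)*m1*m1 + (-8)*e*k1 + (-16)*e*k1*k1 + (-4)*e*m1*m1 + (-8)*e*e + (-32)*e*e*k1 + (-32)*e*e*k1*k1 + (-4)*Y1*k1 + (-8)*Y1*k1*k1 + (-4)*Y1*m1*m1 + (-8)*Y1*e + (-48)*Y1*e*k1 + (-64)*Y1*e*k1*k1 + (-16)*Y1*e*m1*m1 + (-32)*Y1*e*e + (-128)*Y1*e*e*k1 + (-128)*Y1*e*e*k1*k1 + (-2)*Y1*Y1 + (-8)*Y1*Y1*k1 + (-8)*Y1*Y1*k1*k1 + (-4)*Y1*Y1*m1*m1 + (-16)*Y1*Y1*e + (-64)*Y1*Y1*e*k1 + (-64)*Y1*Y1*e*k1*k1 + (-16)*Y1*Y1*e*m1*m1 + (-32)*Y1*Y1*e*e + (-128)*Y1*Y1*e*e*k1 + (-128)*Y1*Y1*e*e*k1*k1 + (4)*X1*k1 + (4)*X1*m1 + (16)*X1*m1*k1 + (8)*X1*e + (16)*X1*e*k1 + (32)*X1*e*m1 + (64)*X1*e*m1*k1 + (4)*X1*Y1 + (8)*X1*Y1*k1 + (16)*X1*Y1*m1 + (32)*X1*Y1*m1*k1 + (16)*X1*Y1*e + (32)*X1*Y1*e*k1 + (64)*X1*Y1*e*m1 + (128)*X1*Y1*e*m1*k1 + (-6)*X1*X1 + (-16)*X1*X1*k1 + (-16)*X1*X1*k1*k1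 + (-8)*X1*X1*m1 + (-8)*X1*X1*m1*m1 + (-16)*X1*X1*e + (-64)*X1*X1*e*k1 + (-64)*X1*X1*e*k1*k1)" "snd h - snd g - 2*snd D = 4*((2) + (4)*k1 + (-2)*m1*k1 + (-4)*e*m1 + (-8)*e*m1*k1 + (-2)*Y1*m1 + (-8)*Y1*m1*k1 + (-16)*Y1*e*m1 + (-32)*Y1*e*m1*k1 + (-4)*Y1*Y1*m1 + (-8)*Y1*Y1*m1*k1 + (-16)*Y1*Y1*e*m1 + (-32)*Y1*Y1*e*m1*k1 + (4)*X1*k1 + (8)*X1*k1*k1 + (2)*X1*m1 + (4)*X1*m1*m1 + (8)*X1*e + (32)*X1*e*k1 + (32)*X1*e*k1*k1 + (4)*X1*Y1 + (16)*X1*Y1*k1 + (16)*X1*Y1*k1*k1 + (4)*X1*Y1*m1 + (8)*X1*Y1*m1*m1 + (16)*X1*Y1*e + (64)*X1*Y1*e*k1 + (64)*X1*Y1*e*k1*k1 + (-4)*X1*X1 + (-8)*X1*X1*k1 + (-8)*X1*X1*m1 + (-16)*X1*X1*m1*k1)"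
    unfolding g_def h_def D_def fst_conv snd_conv by (simp_all add: algebra_simps power2_eq_square)
  have nzD: "fst D = 4*((-1) + (-1)*k1 + (-2)*e + (-4)*e*k1 + (-1)*Y1 + (-2)*Y1*k1 + (-4)*Y1*e + (-8)*Y1*e*k1 + (1)*X1 + (2)*X1*m1) + 2" unfolding D_def fst_conv by (simp add: algebra_simps power2_eq_square)
  have nzT: "4*fst n0 - fst (zs_mul d D D) = 8*((-2)*k1 + (-2)*k1*k1 + (4)*m1 + (-1)*m1*m1 + (-4)*e + (-16)*e*k1 + (-16)*e*k1*k1 + (-4)*e*m1*m1 + (-8)*e*e + (-32)*e*e*k1 + (-32)*e*e*k1*k1 + (-2)*Y1 + (-8)*Y1*k1 + (-8)*Y1*k1*k1 + (-4)*Y1*m1*m1 + (-16)*Y1*e + (-64)*Y1*e*k1 + (-64)*Y1*e*k1*k1 + (-16)*Y1*e*m1*m1 + (-32)*Y1*e*e + (-128)*Y1*e*e*k1 + (-128)*Y1*e*e*k1*k1 + (-2)*Y1*Y1 + (-8)*Y1*Y1*k1 + (-8)*Y1*Y1*k1*k1 + (-4)*Y1*Y1*m1*m1 + (-16)*Y1*Y1*e + (-64)*Y1*Y1*e*k1 + (-64)*Y1*Y1*e*k1*k1 + (-16)*Y1*Y1*e*m1*m1 + (-32)*Y1*Y1*e*e + (-128)*Y1*Y1*e*e*k1 + (-128)*Y1*Y1*e*e*k1*k1 + (2)*X1 + (4)*X1*k1 + (8)*X1*m1 + (16)*X1*m1*k1 + (8)*X1*e + (16)*X1*e*k1 + (32)*X1*e*m1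 + (64)*X1*e*m1*k1 + (4)*X1*Y1 + (8)*X1*Y1*k1 + (16)*X1*Y1*m1 + (32)*X1*Y1*m1*k1 + (16)*X1*Y1*e + (32)*X1*Y1*e*k1 + (64)*X1*Y1*e*m1 + (128)*X1*Y1*e*m1*k1 + (-6)*X1*X1 + (-16)*X1*X1*k1 + (-16)*X1*X1*k1*k1 + (-8)*X1*X1*m1 + (-8)*X1*X1*m1*m1 + (-16)*X1*X1*e + (-64)*X1*X1*e*k1 + (-64)*X1*X1*e*k1*k1) + 4"
    unfolding D_def zs_mul_def d_def n0_def fst_conv by (simp add: algebra_simps power2_eq_square)
  have Tnz: "4*fst n0 - fst (zs_mul d D D) \<noteq> 0 \<or> 4*snd n0 - snd (zs_mul d D D) \<noteq> 0"
    using ne84[OF nzT] by blast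
  have d4: "d mod 4 = 2" unfolding d_def by presburger
  have dpp: "d > 0" using dp unfolding d_def .
  have d0: "d \<ge> 0" using dpp by simp
  have r2': "phi d g * phi d h = phi d (4*fst n0 - fst (zs_mul d D D), 4*snd n0 - snd (zs_mul d D D))"
    by (simp only: phi_mul[OF d0, symmetric] r2)
  have "good d n0 D s g h"
    by (rule good_intro[OF d4 dpp r1 r2' dvdI[OF c1(1)] dvdI[OF c1(2)] dvdI[OF c2(1)] dvdI[OF c2(2)]
      dvdI[OF c3(1)] dvdI[OF c3(2)] _ _ Tnz])
     (simp_all add: g_def ne42[OF nzD])
  thus ?thesis unfolding d_def n0_def by blast
qed

lemma caseB:
  fixes m1 k1 X1 Y1 e :: int
  assumes rel: "(4*X1)^2 - (8*e+2)*(2*Y1+1)^2 = 6" and dp: "8*e+2 > 0"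
    and Tnz: "4*(4*(4*m1+2)+2) - (((-4)*k1 + (-16)*e*k1 + (-8)*Y1*k1 + (-32)*Y1*e*k1 + (12)*X1 + (16)*X1*m1)*((-4)*k1 + (-16)*e*k1 + (-8)*Y1*k1 + (-32)*Y1*e*k1 + (12)*X1 + (16)*X1*m1) + (8*e+2)*((-2) + (-4)*m1 + (-4)*Y1 + (-8)*Y1*m1 + (8)*X1*k1)*((-2) + (-4)*m1 + (-4)*Y1 + (-8)*Y1*m1 + (8)*X1*k1)) \<noteq> 0 \<or> 4*(4*(2*k1)) - (((-4)*k1 + (-16)*e*k1 + (-8)*Y1*k1 + (-32)*Y1*e*k1 + (12)*X1 + (16)*X1*m1)*((-2) + (-4)*m1 + (-4)*Y1 + (-8)*Y1*m1 + (8)*X1*k1) + ((-2) + (-4)*m1 + (-4)*Y1 + (-8)*Y1*m1 + (8)*X1*k1)*((-4)*k1 + (-16)*e*k1 + (-8)*Y1*k1 + (-32)*Y1*e*k1 + (12)*X1 + (16)*X1*m1)) \<noteq> 0"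
  shows "\<exists>D s g h. good (8*e+2) (4*(4*m1+2)+2, 4*(2*k1)) D s g h"
proof -
  define n0 where "n0 = (4*(4*m1+2)+2, 4*(2*k1))"
  define d where "d = 8*e+2"
  define D where "D = ((-4)*k1 + (-16)*e*k1 + (-8)*Y1*k1 + (-32)*Y1*e*k1 + (12)*X1 + (16)*X1*m1, (-2) + (-4)*m1 + (-4)*Y1 + (-8)*Y1*m1 + (8)*X1*k1)"
  define s where "s = ((-4)*k1 + (-16)*e*k1 + (-8)*Y1*k1 + (-32)*Y1*e*k1 + (8)*X1 + (16)*X1*m1, (-3) + (-4)*m1 + (-6)*Y1 + (-8)*Y1*m1 + (8)*X1*k1)"
  define g where "g = (4::int, 0::int)"
  define h where "h = ((8) + (-4)*k1*k1 + (8)*m1 + (-8)*m1*m1 + (-8)*e + (-32)*e*k1*k1 + (-32)*e*m1 + (-32)*e*m1*m1 + (-64)*e*e*k1*k1 + (-8)*Y1 + (-16)*Y1*k1*k1 + (-32)*Y1*m1 + (-32)*Y1*m1*m1 + (-32)*Y1*e + (-128)*Y1*e*k1*k1 + (-128)*Y1*e*m1 + (-128)*Y1*e*m1*m1 + (-256)*Y1*e*e*k1*k1 + (-8)*Y1*Y1 + (-16)*Y1*Y1*k1*k1 + (-32)*Y1*Y1*m1 + (-32)*Y1*Y1*m1*m1 + (-32)*Y1*Y1*e + (-128)*Y1*Y1*e*k1*k1 + (-128)*Y1*Y1*e*m1 + (-128)*Y1*Y1*e*m1*m1 + (-256)*Y1*Y1*e*e*k1*k1 + (40)*X1*k1 +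 (64)*X1*m1*k1 + (160)*X1*e*k1 + (256)*X1*e*m1*k1 + (80)*X1*Y1*k1 + (128)*X1*Y1*m1*k1 + (320)*X1*Y1*e*k1 + (512)*X1*Y1*e*m1*k1 + (-36)*X1*X1 + (-32)*X1*X1*k1*k1 + (-96)*X1*X1*m1 + (-64)*X1*X1*m1*m1 + (-128)*X1*X1*e*k1*k1, (4)*k1 + (-8)*m1*k1 + (-16)*e*k1 + (-32)*e*m1*k1 + (-16)*Y1*k1 + (-32)*Y1*m1*k1 + (-64)*Y1*e*k1 + (-128)*Y1*e*m1*k1 + (-16)*Y1*Y1*k1 + (-32)*Y1*Y1*m1*k1 + (-64)*Y1*Y1*e*k1 + (-128)*Y1*Y1*e*m1*k1 + (12)*X1 + (16)*X1*k1*k1 + (40)*X1*m1 + (32)*X1*m1*m1 + (64)*X1*e*k1*k1 + (24)*X1*Y1 + (32)*X1*Y1*k1*k1 + (80)*X1*Y1*m1 + (64)*X1*Y1*m1*m1 + (128)*X1*Y1*e*k1*k1 + (-48)*X1*X1*k1 + (-64)*X1*X1*m1*k1)"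
  have r1: "zs_mul d D D = zs_add (zs_mul d s s) (3*fst n0, 3*snd n0)"
  proof (rule prod_eqI)
    have "fst (zs_mul d D D) - fst (zs_add (zs_mul d s s) (3*fst n0, 3*snd n0)) = (2*(4*m1+2)+1) * ((4*X1)^2 - (8*e+2)*(2*Y1+1)^2 - 6)"
      unfolding zs_mul_def zs_add_def D_def s_def d_def n0_def fst_conv snd_conv by (simp add: algebra_simps power2_eq_square)
    thus "fst (zs_mul d D D) = fst (zs_add (zs_mul d s s) (3*fst n0, 3*snd n0))" using rel by simp
    have "snd (zs_mul d D D) - snd (zs_add (zs_mul d s s) (3*fst n0, 3*snd n0)) = (2*(2*k1)) * ((4*X1)^2 - (8*e+2)*(2*Y1+1)^2 - 6)"
      unfolding zs_mul_def zs_add_def D_def s_def d_def n0_def fst_conv snd_conv by (simp add: algebra_simps power2_eq_square)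
    thus "snd (zs_mul d D D) = snd (zs_add (zs_mul d s s) (3*fst n0, 3*snd n0))" using rel by simp
  qed
  have r2: "zs_mul d g h = (4*fst n0 - fst (zs_mul d D D), 4*snd n0 - snd (zs_mul d D D))"
    unfolding zs_mul_def g_def h_def D_def d_def n0_def fst_conv snd_conv by (simp add: algebra_simps power2_eq_square)
  have c1: "fst g - fst h = 2*((-2) + (2)*k1*k1 + (-4)*m1 + (4)*m1*m1 + (4)*e + (16)*e*k1*k1 + (16)*e*m1 + (16)*e*m1*m1 + (32)*e*e*k1*k1 + (4)*Y1 + (8)*Y1*k1*k1 + (16)*Y1*m1 + (16)*Y1*m1*m1 + (16)*Y1*e + (64)*Y1*e*k1*k1 + (64)*Y1*e*m1 + (64)*Y1*e*m1*m1 + (128)*Y1*e*e*k1*k1 + (4)*Y1*Y1 + (8)*Y1*Y1*k1*k1 + (16)*Y1*Y1*m1 + (16)*Y1*Y1*m1*m1 + (16)*Y1*Y1*e + (64)*Y1*Y1*e*k1*k1 + (64)*Y1*Y1*e*m1 + (64)*Y1*Y1*e*m1*m1 + (128)*Y1*Y1*e*e*k1*k1 + (-20)*X1*k1 + (-32)*X1*m1*k1 + (-80)*X1*e*k1 + (-128)*X1*e*m1*k1 + (-40)*X1*Y1*k1 + (-64)*X1*Y1*m1*k1 + (-160)*X1*Y1*e*k1 + (-256)*X1*Y1*e*m1*k1 + (18)*X1*X1 + (16)*X1*X1*k1*k1 + (48)*X1*X1*m1 + (32)*X1*X1*m1*m1 + (64)*X1*X1*e*k1*k1)" "snd g - snd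 h = 2*((-2)*k1 + (4)*m1*k1 + (8)*e*k1 + (16)*e*m1*k1 + (8)*Y1*k1 + (16)*Y1*m1*k1 + (32)*Y1*e*k1 + (64)*Y1*e*m1*k1 + (8)*Y1*Y1*k1 + (16)*Y1*Y1*m1*k1 + (32)*Y1*Y1*e*k1 + (64)*Y1*Y1*e*m1*k1 + (-6)*X1 + (-8)*X1*k1*k1 + (-20)*X1*m1 + (-16)*X1*m1*m1 + (-32)*X1*e*k1*k1 + (-12)*X1*Y1 + (-16)*X1*Y1*k1*k1 + (-40)*X1*Y1*m1 + (-32)*X1*Y1*m1*m1 + (-64)*X1*Y1*e*k1*k1 + (24)*X1*X1*k1 + (32)*X1*X1*m1*k1)"
    unfolding g_def h_def fst_conv snd_conv by (simp_all add: algebra_simps power2_eq_square)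
  have c2: "fst g + fst h = 4*((3) + (-1)*k1*k1 + (2)*m1 + (-2)*m1*m1 + (-2)*e + (-8)*e*k1*k1 + (-8)*e*m1 + (-8)*e*m1*m1 + (-16)*e*e*k1*k1 + (-2)*Y1 + (-4)*Y1*k1*k1 + (-8)*Y1*m1 + (-8)*Y1*m1*m1 + (-8)*Y1*e + (-32)*Y1*e*k1*k1 + (-32)*Y1*e*m1 + (-32)*Y1*e*m1*m1 + (-64)*Y1*e*e*k1*k1 + (-2)*Y1*Y1 + (-4)*Y1*Y1*k1*k1 + (-8)*Y1*Y1*m1 + (-8)*Y1*Y1*m1*m1 + (-8)*Y1*Y1*e + (-32)*Y1*Y1*e*k1*k1 + (-32)*Y1*Y1*e*m1 + (-32)*Y1*Y1*e*m1*m1 + (-64)*Y1*Y1*e*e*k1*k1 + (10)*X1*k1 + (16)*X1*m1*k1 + (40)*X1*e*k1 + (64)*X1*e*m1*k1 + (20)*X1*Y1*k1 + (32)*X1*Y1*m1*k1 + (80)*X1*Y1*e*k1 + (128)*X1*Y1*e*m1*k1 + (-9)*X1*X1 + (-8)*X1*X1*k1*k1 + (-24)*X1*X1*m1 + (-16)*X1*X1*m1*m1 + (-32)*X1*X1*e*k1*k1)" "snd g + snd h = 4*((1)*k1 + (-2)*m1*k1 + (-4)*e*k1 + (-8)*e*m1*k1 + (-4)*Y1*k1 + (-8)*Y1*m1*k1 + (-16)*Y1*e*k1 + (-32)*Y1*e*m1*k1 + (-4)*Y1*Y1*k1 + (-8)*Y1*Y1*m1*k1 + (-16)*Y1*Y1*e*k1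 + (-32)*Y1*Y1*e*m1*k1 + (3)*X1 + (4)*X1*k1*k1 + (10)*X1*m1 + (8)*X1*m1*m1 + (16)*X1*e*k1*k1 + (6)*X1*Y1 + (8)*X1*Y1*k1*k1 + (20)*X1*Y1*m1 + (16)*X1*Y1*m1*m1 + (32)*X1*Y1*e*k1*k1 + (-12)*X1*X1*k1 + (-16)*X1*X1*m1*k1)"
    unfolding g_def h_def fst_conv snd_conv by (simp_all add: algebra_simps power2_eq_square)
  have c3: "fst h - fst g - 2*fst D = 4*((1) + (2)*k1 + (-1)*k1*k1 + (2)*m1 + (-2)*m1*m1 + (-2)*e + (8)*e*k1 + (-8)*e*k1*k1 + (-8)*e*m1 + (-8)*e*m1*m1 + (-16)*e*e*k1*k1 + (-2)*Y1 + (4)*Y1*k1 + (-4)*Y1*k1*k1 + (-8)*Y1*m1 + (-8)*Y1*m1*m1 + (-8)*Y1*e + (16)*Y1*e*k1 + (-32)*Y1*e*k1*k1 + (-32)*Y1*e*m1 + (-32)*Y1*e*m1*m1 + (-64)*Y1*e*e*k1*k1 + (-2)*Y1*Y1 + (-4)*Y1*Y1*k1*k1 + (-8)*Y1*Y1*m1 + (-8)*Y1*Y1*m1*m1 + (-8)*Y1*Y1*e + (-32)*Y1*Y1*e*k1*k1 + (-32)*Y1*Y1*e*m1 + (-32)*Y1*Y1*e*m1*m1 + (-64)*Y1*Y1*e*e*k1*k1 + (-6)*X1 + (10)*X1*k1 + (-8)*X1*m1 + (16)*X1*m1*k1 + (40)*X1*e*k1 + (64)*X1*e*m1*k1 + (20)*X1*Y1*k1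 + (32)*X1*Y1*m1*k1 + (80)*X1*Y1*e*k1 + (128)*X1*Y1*e*m1*k1 + (-9)*X1*X1 + (-8)*X1*X1*k1*k1 + (-24)*X1*X1*m1 + (-16)*X1*X1*m1*m1 + (-32)*X1*X1*e*k1*k1)" "snd h - snd g - 2*snd D = 4*((1) + (1)*k1 + (2)*m1 + (-2)*m1*k1 + (-4)*e*k1 + (-8)*e*m1*k1 + (2)*Y1 + (-4)*Y1*k1 + (4)*Y1*m1 + (-8)*Y1*m1*k1 + (-16)*Y1*e*k1 + (-32)*Y1*e*m1*k1 + (-4)*Y1*Y1*k1 + (-8)*Y1*Y1*m1*k1 + (-16)*Y1*Y1*e*k1 + (-32)*Y1*Y1*e*m1*k1 + (3)*X1 + (-4)*X1*k1 + (4)*X1*k1*k1 + (10)*X1*m1 + (8)*X1*m1*m1 + (16)*X1*e*k1*k1 + (6)*X1*Y1 + (8)*X1*Y1*k1*k1 + (20)*X1*Y1*m1 + (16)*X1*Y1*m1*m1 + (32)*X1*Y1*e*k1*k1 + (-12)*X1*X1*k1 + (-16)*X1*X1*m1*k1)"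
    unfolding g_def h_def D_def fst_conv snd_conv by (simp_all add: algebra_simps power2_eq_square)
  have nzD: "snd D = 4*((-1) + (-1)*m1 + (-1)*Y1 + (-2)*Y1*m1 + (2)*X1*k1) + 2" unfolding D_def snd_conv by (simp add: algebra_simps power2_eq_square)
  have Tnz': "4*fst n0 - fst (zs_mul d D D) \<noteq> 0 \<or> 4*snd n0 - snd (zs_mul d D D) \<noteq> 0"
    using Tnz unfolding D_def zs_mul_def d_def n0_def fst_conv snd_conv by simp
  have d4: "d mod 4 = 2" unfolding d_def by presburger
  have dpp: "d > 0" using dp unfolding d_def .
  have d0: "d \<ge> 0" using dpp by simp
  have r2': "phi d g * phi d h = phi d (4*fst n0 - fst (zs_mul d D D), 4*snd n0 - snd (zs_mul d D D))"
    by (simp only: phi_mul[OF d0, symmetric] r2)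
  have "good d n0 D s g h"
    by (rule good_intro[OF d4 dpp r1 r2' dvdI[OF c1(1)] dvdI[OF c1(2)] dvdI[OF c2(1)] dvdI[OF c2(2)]
      dvdI[OF c3(1)] dvdI[OF c3(2)] _ _ Tnz'])
     (simp_all add: g_def ne42[OF nzD])
  thus ?thesis unfolding d_def n0_def by blast
qed



definition cV0 :: "int \<Rightarrow> int \<Rightarrow> int \<Rightarrow> int \<Rightarrow> int \<Rightarrow> int" where
  "cV0 X1 Y1 e m1 k1 = (-16)*k1 + (16)*m1*k1 + (-64)*e*k1 + (128)*e*m1*k1 + (256)*e*e*m1*k1 + (-32)*Y1*k1 + (96)*Y1*m1*k1 + (-128)*Y1*e*k1 + (768)*Y1*e*m1*k1 + (1536)*Y1*e*e*m1*k1 + (192)*Y1*Y1*m1*k1 + (1536)*Y1*Y1*e*m1*k1 + (3072)*Y1*Y1*e*e*m1*k1 + (128)*Y1*Y1*Y1*m1*k1 + (1024)*Y1*Y1*Y1*e*m1*k1 + (2048)*Y1*Y1*Y1*e*e*m1*k1 + (8)*X1 + (-48)*X1*k1*k1 + (48)*X1*m1 + (-96)*X1*m1*m1 + (-384)*X1*e*k1*k1 + (-64)*X1*e*m1 + (-384)*X1*e*m1*m1 + (-768)*X1*e*e*k1*k1 + (-192)*X1*Y1*k1*k1 + (-64)*X1*Y1*m1 + (-384)*X1*Y1*m1*m1 + (-1536)*X1*Y1*e*k1*k1 + (-256)*X1*Y1*e*m1 + (-1536)*X1*Y1*e*m1*m1 + (-3072)*X1*Y1*e*e*k1*k1 + (-192)*X1*Y1*Y1*k1*k1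 + (-64)*X1*Y1*Y1*m1 + (-384)*X1*Y1*Y1*m1*m1 + (-1536)*X1*Y1*Y1*e*k1*k1 + (-256)*X1*Y1*Y1*e*m1 + (-1536)*X1*Y1*Y1*e*m1*m1 + (-3072)*X1*Y1*Y1*e*e*k1*k1 + (64)*X1*X1*k1 + (384)*X1*X1*m1*k1 + (256)*X1*X1*e*k1 + (1536)*X1*X1*e*m1*k1 + (128)*X1*X1*Y1*k1 + (768)*X1*X1*Y1*m1*k1 + (512)*X1*X1*Y1*e*k1 + (3072)*X1*X1*Y1*e*m1*k1 + (-16)*X1*X1*X1 + (-128)*X1*X1*X1*k1*k1 + (-128)*X1*X1*X1*m1 + (-256)*X1*X1*X1*m1*m1 + (-512)*X1*X1*X1*e*k1*k1"
definition cV1 :: "int \<Rightarrow> int \<Rightarrow> int \<Rightarrow> int \<Rightarrow> int \<Rightarrow> int" where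
  "cV1 X1 Y1 e m1 k1 = (-2) + (4)*k1*k1 + (-16)*m1 + (8)*m1*m1 + (32)*e*k1*k1 + (32)*e*m1*m1 + (64)*e*e*k1*k1 + (-4)*Y1 + (24)*Y1*k1*k1 + (-32)*Y1*m1 + (48)*Y1*m1*m1 + (192)*Y1*e*k1*k1 + (192)*Y1*e*m1*m1 + (384)*Y1*e*e*k1*k1 + (48)*Y1*Y1*k1*k1 + (96)*Y1*Y1*m1*m1 + (384)*Y1*Y1*e*k1*k1 + (384)*Y1*Y1*e*m1*m1 + (768)*Y1*Y1*e*e*k1*k1 + (32)*Y1*Y1*Y1*k1*k1 + (64)*Y1*Y1*Y1*m1*m1 + (256)*Y1*Y1*Y1*e*k1*k1 + (256)*Y1*Y1*Y1*e*m1*m1 + (512)*Y1*Y1*Y1*e*e*k1*k1 + (24)*X1*k1 + (-96)*X1*m1*k1 + (-32)*X1*e*k1 + (-384)*X1*e*m1*k1 + (-32)*X1*Y1*k1 + (-384)*X1*Y1*m1*k1 + (-128)*X1*Y1*e*k1 + (-1536)*X1*Y1*e*m1*k1 + (-32)*X1*Y1*Y1*k1 + (-384)*X1*Y1*Y1*m1*k1 + (-128)*X1*Y1*Y1*e*k1 + (-1536)*X1*Y1*Y1*e*m1*k1 + (4)*X1*X1 + (96)*X1*X1*k1*k1 + (64)*X1*X1*m1 + (192)*X1*X1*m1*m1 + (384)*X1*X1*e*k1*k1 + (8)*X1*X1*Y1 + (192)*X1*X1*Y1*k1*k1 + (128)*X1*X1*Y1*m1 + (384)*X1*X1*Y1*m1*m1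 + (768)*X1*X1*Y1*e*k1*k1 + (-64)*X1*X1*X1*k1 + (-256)*X1*X1*X1*m1*k1"

lemma mymod: "(a::int) mod m = (a mod m) mod m" by simp

lemma cV0_mod: "cV0 X1 Y1 e m1 k1 mod 3 = cV0 (X1 mod 3) (Y1 mod 3) (e mod 3) (m1 mod 3) (k1 mod 3) mod 3"
  unfolding cV0_def by (intro mod_add_cong mod_mult_cong mod_diff_cong mymod refl)
lemma cV1_mod: "cV1 X1 Y1 e m1 k1 mod 3 = cV1 (X1 mod 3) (Y1 mod 3) (e mod 3) (m1 mod 3) (k1 mod 3) mod 3"
  unfolding cV1_def by (intro mod_add_cong mod_mult_cong mod_diff_cong mymod refl)
lemma cond_mod: "(4*m1 - 2*k1*(4*X1)*(2*Y1+1)) mod 3 = (4*(m1 mod 3) - 2*(k1 mod 3)*(4*(X1 mod 3))*(2*(Y1 mod 3)+1)) mod 3"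
  for m1 k1 X1 Y1 :: int
  by (intro mod_add_cong mod_mult_cong mod_diff_cong mymod refl)

lemma cV_enum: "\<forall>a\<in>{1,2::int}. \<forall>b\<in>{0,2::int}. \<forall>c\<in>{0,1,2::int}. \<forall>f\<in>{0,1,2::int}.
   (4*c - 2*f*(4*a)*(2*b+1)) mod 3 \<noteq> 0 \<longrightarrow> cV0 a b 1 c f mod 3 = 0 \<and> cV1 a b 1 c f mod 3 = 0"
  unfolding cV0_def cV1_def by simp

lemma cV_dvd:
  fixes X1 Y1 e m1 k1 :: int
  assumes "X1 mod 3 \<noteq> 0" "Y1 mod 3 \<noteq> 1" "e mod 3 = 1" "(4*m1 - 2*k1*(4*X1)*(2*Y1+1)) mod 3 \<noteq> 0"
  shows "3 dvd cV0 X1 Y1 e m1 k1" "3 dvd cV1 X1 Y1 e m1 k1"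
proof -
  have a: "X1 mod 3 \<in> {1,2}" using assms(1) by auto
  have b: "Y1 mod 3 \<in> {0,2}" using assms(2) by auto
  have c: "m1 mod 3 \<in> {0,1,2}" by auto
  have f: "k1 mod 3 \<in> {0,1,2}" by auto
  have cd: "(4*(m1 mod 3) - 2*(k1 mod 3)*(4*(X1 mod 3))*(2*(Y1 mod 3)+1)) mod 3 \<noteq> 0"
    using assms(4) cond_mod by simp
  have h: "cV0 (X1 mod 3) (Y1 mod 3) 1 (m1 mod 3) (k1 mod 3) mod 3 = 0 \<and> cV1 (X1 mod 3) (Y1 mod 3) 1 (m1 mod 3) (k1 mod 3) mod 3 = 0"
    using bspec[OF bspec[OF bspec[OF bspec[OF cV_enum a] b] c] f] cd by blast
  have "cV0 X1 Y1 e m1 k1 mod 3 = 0" by (subst cV0_mod) (simp only: assms(3) h)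
  thus "3 dvd cV0 X1 Y1 e m1 k1" by (simp only: dvd_eq_mod_eq_0)
  have "cV1 X1 Y1 e m1 k1 mod 3 = 0" by (subst cV1_mod) (simp only: assms(3) h)
  thus "3 dvd cV1 X1 Y1 e m1 k1" by (simp only: dvd_eq_mod_eq_0)
qed


lemma sq_mod3: "(x::int) mod 3 \<noteq> 0 \<Longrightarrow> (x*x) mod 3 = 1"
proof -
  assume "x mod 3 \<noteq> 0"
  hence "x mod 3 = 1 \<or> x mod 3 = 2" by presburger
  moreover have "(x*x) mod 3 = ((x mod 3)*(x mod 3)) mod 3" by (simp add: mod_mult_eq)
  ultimately show ?thesis by auto
qed

lemma L2: "3*a - b = 2*q \<Longrightarrow> 3*c = b \<Longrightarrow> 2 dvd a - (c::int)" by presburger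
lemma L4: "3*a + b = 4*q \<Longrightarrow> 3*c = b \<Longrightarrow> 4 dvd a + (c::int)" by presburger
lemma L4b: "b - 3*a - 6*D = 4*q \<Longrightarrow> 3*c = b \<Longrightarrow> 4 dvd c - a - 2*(D::int)" by presburger

lemma caseC:
  fixes m1 k1 X1 Y1 e :: int
  assumes rel: "(4*X1)^2 - (8*e+2)*(2*Y1+1)^2 = 6" and dp: "8*e+2 > 0"
    and m3: "X1 mod 3 \<noteq> 0" "Y1 mod 3 \<noteq> 1" "e mod 3 = 1" "(4*m1 - 2*k1*(4*X1)*(2*Y1+1)) mod 3 \<noteq> 0"
  shows "\<exists>D s g h. good (8*e+2) (4*(4*m1)+2, 4*(2*k1)) D s g h"
proof -
  define n0 where "n0 = (4*(4*m1)+2, 4*(2*k1))"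
  define d where "d = 8*e+2"
  define D where "D = ((-4)*k1 + (-16)*e*k1 + (-8)*Y1*k1 + (-32)*Y1*e*k1 + (4)*X1 + (16)*X1*m1, (-4)*m1 + (-8)*Y1*m1 + (8)*X1*k1)"
  define s where "s = ((-4)*k1 + (-16)*e*k1 + (-8)*Y1*k1 + (-32)*Y1*e*k1 + (16)*X1*m1, (-1) + (-4)*m1 + (-2)*Y1 + (-8)*Y1*m1 + (8)*X1*k1)"
  define g where "g = (8*X1, 4*Y1+2)"
  define h where "h = (cV0 X1 Y1 e m1 k1 div 3, cV1 X1 Y1 e m1 k1 div 3)"
  define T where "T = (4*fst n0 - fst (zs_mul d D D), 4*snd n0 - snd (zs_mul d D D))"
  have h3: "3*fst h = cV0 X1 Y1 e m1 k1" "3*snd h = cV1 X1 Y1 e m1 k1"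
    using cV_dvd[OF m3] unfolding h_def by simp_all
  have d4: "d mod 4 = 2" unfolding d_def by presburger
  have dpp: "d > 0" using dp unfolding d_def .
  have d0: "d \<ge> 0" using dpp by simp
  have r1: "zs_mul d D D = zs_add (zs_mul d s s) (3*fst n0, 3*snd n0)"
  proof (rule prod_eqI)
    have "fst (zs_mul d D D) - fst (zs_add (zs_mul d s s) (3*fst n0, 3*snd n0)) = (2*(4*m1)+1) * ((4*X1)^2 - (8*e+2)*(2*Y1+1)^2 - 6)"
      unfolding zs_mul_def zs_add_def D_def s_def d_def n0_def fst_conv snd_conv by (simp add: algebra_simps power2_eq_square)
    thus "fst (zs_mul d D D) = fst (zs_add (zs_mul d s s) (3*fst n0, 3*snd n0))" using rel by simp
    have "snd (zs_mul d D D) - snd (zs_add (zs_mul d s s) (3*fst n0, 3*snd n0)) = (2*(2*k1)) * ((4*X1)^2 - (8*e+2)*(2*Y1+1)^2 - 6)"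
      unfolding zs_mul_def zs_add_def D_def s_def d_def n0_def fst_conv snd_conv by (simp add: algebra_simps power2_eq_square)
    thus "snd (zs_mul d D D) = snd (zs_add (zs_mul d s s) (3*fst n0, 3*snd n0))" using rel by simp
  qed
  have hV: "zs_mul d T (4*X1, -(2*Y1+1)) = (4*cV0 X1 Y1 e m1 k1, 4*cV1 X1 Y1 e m1 k1)"
    unfolding T_def n0_def D_def d_def zs_mul_def cV0_def cV1_def fst_conv snd_conv
    by (simp add: algebra_simps power2_eq_square)
  have aa: "zs_mul d (4*X1, 2*Y1+1) (4*X1, -(2*Y1+1)) = (6, 0)"
    using rel unfolding zs_mul_def d_def fst_conv snd_conv by (simp add: algebra_simps power2_eq_square)
  have r2': "phi d g * phi d h = phi d T"
  proof -
    define A where "A = phi d (4*X1, 2*Y1+1)"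
    define Ab where "Ab = phi d (4*X1, -(2*Y1+1))"
    define Cp where "Cp = phi d (cV0 X1 Y1 e m1 k1, cV1 X1 Y1 e m1 k1)"
    have e1: "A*Ab = 6"
    proof -
      have "A*Ab = phi d (zs_mul d (4*X1, 2*Y1+1) (4*X1, -(2*Y1+1)))" unfolding A_def Ab_def by (rule phi_mul[OF d0, symmetric])
      also have "\<dots> = 6" unfolding aa phi_def by simp
      finally show ?thesis .
    qed
    have e2: "4*Cp = phi d T * Ab"
    proof -
      have "phi d T * Ab = phi d (zs_mul d T (4*X1, -(2*Y1+1)))" unfolding Ab_def by (rule phi_mul[OF d0, symmetric])
      also have "\<dots> = phi d (4*cV0 X1 Y1 e m1 k1, 4*cV1 X1 Y1 e m1 k1)" unfolding hV ..
      also have "\<dots> = 4*Cp" unfolding Cp_def phi_def by (simp add: algebra_simps)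
      finally show ?thesis by simp
    qed
    have e3: "3*phi d h = Cp" unfolding Cp_def using h3 by (simp add: phi_def algebra_simps flip: h3)
    have e4: "phi d g = 2*A" unfolding A_def g_def phi_def by simp
    have "12*(phi d g * phi d h) = 2*A*(4*(3*phi d h))" unfolding e4 by (simp add: algebra_simps)
    also have "\<dots> = 2*A*(phi d T * Ab)" unfolding e3 e2 by simp
    also have "\<dots> = 2*(A*Ab)*phi d T" by (simp add: algebra_simps)
    also have "\<dots> = 12 * phi d T" unfolding e1 by simp
    finally show ?thesis by simp
  qed
  have q1: "3*fst g - cV0 X1 Y1 e m1 k1 = 2*((8)*k1 + (-8)*m1*k1 + (32)*e*k1 + (-64)*e*m1*k1 + (-128)*e*e*m1*k1 + (16)*Y1*k1 + (-48)*Y1*m1*k1 + (64)*Y1*e*k1 + (-384)*Y1*e*m1*k1 + (-768)*Y1*e*e*m1*k1 + (-96)*Y1*Y1*m1*k1 + (-768)*Y1*Y1*e*m1*k1 + (-1536)*Y1*Y1*e*e*m1*k1 + (-64)*Y1*Y1*Y1*m1*k1 + (-512)*Y1*Y1*Y1*e*m1*k1 + (-1024)*Y1*Y1*Y1*e*e*m1*k1 + (8)*X1 + (24)*X1*k1*k1 + (-24)*X1*m1 + (48)*X1*m1*m1 + (192)*X1*e*k1*k1 + (32)*X1*e*m1 + (192)*X1*e*m1*m1 + (384)*X1*e*e*k1*k1 + (96)*X1*Y1*k1*k1 + (32)*X1*Y1*m1 + (192)*X1*Y1*m1*m1 + (768)*X1*Y1*e*k1*k1 + (128)*X1*Y1*e*m1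 + (768)*X1*Y1*e*m1*m1 + (1536)*X1*Y1*e*e*k1*k1 + (96)*X1*Y1*Y1*k1*k1 + (32)*X1*Y1*Y1*m1 + (192)*X1*Y1*Y1*m1*m1 + (768)*X1*Y1*Y1*e*k1*k1 + (128)*X1*Y1*Y1*e*m1 + (768)*X1*Y1*Y1*e*m1*m1 + (1536)*X1*Y1*Y1*e*e*k1*k1 + (-32)*X1*X1*k1 + (-192)*X1*X1*m1*k1 + (-128)*X1*X1*e*k1 + (-768)*X1*X1*e*m1*k1 + (-64)*X1*X1*Y1*k1 + (-384)*X1*X1*Y1*m1*k1 + (-256)*X1*X1*Y1*e*k1 + (-1536)*X1*X1*Y1*e*m1*k1 + (8)*X1*X1*X1 + (64)*X1*X1*X1*k1*k1 + (64)*X1*X1*X1*m1 + (128)*X1*X1*X1*m1*m1 + (256)*X1*X1*X1*e*k1*k1)" "3*snd g - cV1 X1 Y1 e m1 k1 = 2*((4) + (-2)*k1*k1 + (8)*m1 + (-4)*m1*m1 + (-16)*e*k1*k1 + (-16)*e*m1*m1 + (-32)*e*e*k1*k1 + (8)*Y1 + (-12)*Y1*k1*k1 + (16)*Y1*m1 + (-24)*Y1*m1*m1 + (-96)*Y1*e*k1*k1 + (-96)*Y1*e*m1*m1 + (-192)*Y1*e*e*k1*k1 + (-24)*Y1*Y1*k1*k1 + (-48)*Y1*Y1*m1*m1 + (-192)*Y1*Y1*e*k1*k1 + (-192)*Y1*Y1*e*m1*m1 + (-384)*Y1*Y1*e*e*k1*k1 + (-16)*Y1*Y1*Y1*k1*k1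 + (-32)*Y1*Y1*Y1*m1*m1 + (-128)*Y1*Y1*Y1*e*k1*k1 + (-128)*Y1*Y1*Y1*e*m1*m1 + (-256)*Y1*Y1*Y1*e*e*k1*k1 + (-12)*X1*k1 + (48)*X1*m1*k1 + (16)*X1*e*k1 + (192)*X1*e*m1*k1 + (16)*X1*Y1*k1 + (192)*X1*Y1*m1*k1 + (64)*X1*Y1*e*k1 + (768)*X1*Y1*e*m1*k1 + (16)*X1*Y1*Y1*k1 + (192)*X1*Y1*Y1*m1*k1 + (64)*X1*Y1*Y1*e*k1 + (768)*X1*Y1*Y1*e*m1*k1 + (-2)*X1*X1 + (-48)*X1*X1*k1*k1 + (-32)*X1*X1*m1 + (-96)*X1*X1*m1*m1 + (-192)*X1*X1*e*k1*k1 + (-4)*X1*X1*Y1 + (-96)*X1*X1*Y1*k1*k1 + (-64)*X1*X1*Y1*m1 + (-192)*X1*X1*Y1*m1*m1 + (-384)*X1*X1*Y1*e*k1*k1 + (32)*X1*X1*X1*k1 + (128)*X1*X1*X1*m1*k1)"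
    unfolding g_def cV0_def cV1_def fst_conv snd_conv by (simp_all add: algebra_simps)
  have q2: "3*fst g + cV0 X1 Y1 e m1 k1 = 4*((-4)*k1 + (4)*m1*k1 + (-16)*e*k1 + (32)*e*m1*k1 + (64)*e*e*m1*k1 + (-8)*Y1*k1 + (24)*Y1*m1*k1 + (-32)*Y1*e*k1 + (192)*Y1*e*m1*k1 + (384)*Y1*e*e*m1*k1 + (48)*Y1*Y1*m1*k1 + (384)*Y1*Y1*e*m1*k1 + (768)*Y1*Y1*e*e*m1*k1 + (32)*Y1*Y1*Y1*m1*k1 + (256)*Y1*Y1*Y1*e*m1*k1 + (512)*Y1*Y1*Y1*e*e*m1*k1 + (8)*X1 + (-12)*X1*k1*k1 + (12)*X1*m1 + (-24)*X1*m1*m1 + (-96)*X1*e*k1*k1 + (-16)*X1*e*m1 + (-96)*X1*e*m1*m1 + (-192)*X1*e*e*k1*k1 + (-48)*X1*Y1*k1*k1 + (-16)*X1*Y1*m1 + (-96)*X1*Y1*m1*m1 + (-384)*X1*Y1*e*k1*k1 + (-64)*X1*Y1*e*m1 + (-384)*X1*Y1*e*m1*m1 + (-768)*X1*Y1*e*e*k1*k1 + (-48)*X1*Y1*Y1*k1*k1 + (-16)*X1*Y1*Y1*m1 + (-96)*X1*Y1*Y1*m1*m1 + (-384)*X1*Y1*Y1*e*k1*k1 + (-64)*X1*Y1*Y1*e*m1 + (-384)*X1*Y1*Y1*e*m1*m1 + (-768)*X1*Y1*Y1*e*e*k1*k1 + (16)*X1*X1*k1 + (96)*X1*X1*m1*k1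 + (64)*X1*X1*e*k1 + (384)*X1*X1*e*m1*k1 + (32)*X1*X1*Y1*k1 + (192)*X1*X1*Y1*m1*k1 + (128)*X1*X1*Y1*e*k1 + (768)*X1*X1*Y1*e*m1*k1 + (-4)*X1*X1*X1 + (-32)*X1*X1*X1*k1*k1 + (-32)*X1*X1*X1*m1 + (-64)*X1*X1*X1*m1*m1 + (-128)*X1*X1*X1*e*k1*k1)" "3*snd g + cV1 X1 Y1 e m1 k1 = 4*((1) + (1)*k1*k1 + (-4)*m1 + (2)*m1*m1 + (8)*e*k1*k1 + (8)*e*m1*m1 + (16)*e*e*k1*k1 + (2)*Y1 + (6)*Y1*k1*k1 + (-8)*Y1*m1 + (12)*Y1*m1*m1 + (48)*Y1*e*k1*k1 + (48)*Y1*e*m1*m1 + (96)*Y1*e*e*k1*k1 + (12)*Y1*Y1*k1*k1 + (24)*Y1*Y1*m1*m1 + (96)*Y1*Y1*e*k1*k1 + (96)*Y1*Y1*e*m1*m1 + (192)*Y1*Y1*e*e*k1*k1 + (8)*Y1*Y1*Y1*k1*k1 + (16)*Y1*Y1*Y1*m1*m1 + (64)*Y1*Y1*Y1*e*k1*k1 + (64)*Y1*Y1*Y1*e*m1*m1 + (128)*Y1*Y1*Y1*e*e*k1*k1 + (6)*X1*k1 + (-24)*X1*m1*k1 + (-8)*X1*e*k1 + (-96)*X1*e*m1*k1 + (-8)*X1*Y1*k1 + (-96)*X1*Y1*m1*k1 + (-32)*X1*Y1*e*k1 + (-384)*X1*Y1*e*m1*k1 + (-8)*X1*Y1*Y1*k1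 + (-96)*X1*Y1*Y1*m1*k1 + (-32)*X1*Y1*Y1*e*k1 + (-384)*X1*Y1*Y1*e*m1*k1 + (1)*X1*X1 + (24)*X1*X1*k1*k1 + (16)*X1*X1*m1 + (48)*X1*X1*m1*m1 + (96)*X1*X1*e*k1*k1 + (2)*X1*X1*Y1 + (48)*X1*X1*Y1*k1*k1 + (32)*X1*X1*Y1*m1 + (96)*X1*X1*Y1*m1*m1 + (192)*X1*X1*Y1*e*k1*k1 + (-16)*X1*X1*X1*k1 + (-64)*X1*X1*X1*m1*k1)"
    unfolding g_def cV0_def cV1_def fst_conv snd_conv by (simp_all add: algebra_simps)
  have q3: "cV0 X1 Y1 e m1 k1 - 3*fst g - 6*fst D = 4*((2)*k1 + (4)*m1*k1 + (8)*e*k1 + (32)*e*m1*k1 + (64)*e*e*m1*k1 + (4)*Y1*k1 + (24)*Y1*m1*k1 + (16)*Y1*e*k1 + (192)*Y1*e*m1*k1 + (384)*Y1*e*e*m1*k1 + (48)*Y1*Y1*m1*k1 + (384)*Y1*Y1*e*m1*k1 + (768)*Y1*Y1*e*e*m1*k1 + (32)*Y1*Y1*Y1*m1*k1 + (256)*Y1*Y1*Y1*e*m1*k1 + (512)*Y1*Y1*Y1*e*e*m1*k1 + (-10)*X1 + (-12)*X1*k1*k1 + (-12)*X1*m1 + (-24)*X1*m1*m1 + (-96)*X1*e*k1*k1 + (-16)*X1*e*m1 + (-96)*X1*e*m1*m1 + (-192)*X1*e*e*k1*k1 + (-48)*X1*Y1*k1*k1 + (-16)*X1*Y1*m1 + (-96)*X1*Y1*m1*m1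 + (-384)*X1*Y1*e*k1*k1 + (-64)*X1*Y1*e*m1 + (-384)*X1*Y1*e*m1*m1 + (-768)*X1*Y1*e*e*k1*k1 + (-48)*X1*Y1*Y1*k1*k1 + (-16)*X1*Y1*Y1*m1 + (-96)*X1*Y1*Y1*m1*m1 + (-384)*X1*Y1*Y1*e*k1*k1 + (-64)*X1*Y1*Y1*e*m1 + (-384)*X1*Y1*Y1*e*m1*m1 + (-768)*X1*Y1*Y1*e*e*k1*k1 + (16)*X1*X1*k1 + (96)*X1*X1*m1*k1 + (64)*X1*X1*e*k1 + (384)*X1*X1*e*m1*k1 + (32)*X1*X1*Y1*k1 + (192)*X1*X1*Y1*m1*k1 + (128)*X1*X1*Y1*e*k1 + (768)*X1*X1*Y1*e*m1*k1 + (-4)*X1*X1*X1 + (-32)*X1*X1*X1*k1*k1 + (-32)*X1*X1*X1*m1 + (-64)*X1*X1*X1*m1*m1 + (-128)*X1*X1*X1*e*k1*k1)" "cV1 X1 Y1 e m1 k1 - 3*snd g - 6*snd D = 4*((-2) + (1)*k1*k1 + (2)*m1 + (2)*m1*m1 + (8)*e*k1*k1 + (8)*e*m1*m1 + (16)*e*e*k1*k1 + (-4)*Y1 + (6)*Y1*k1*k1 + (4)*Y1*m1 + (12)*Y1*m1*m1 + (48)*Y1*e*k1*k1 + (48)*Y1*e*m1*m1 + (96)*Y1*e*e*k1*k1 + (12)*Y1*Y1*k1*k1 + (24)*Y1*Y1*m1*m1 + (96)*Y1*Y1*e*k1*k1 + (96)*Y1*Y1*e*m1*m1 + (192)*Y1*Y1*e*e*k1*k1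 + (8)*Y1*Y1*Y1*k1*k1 + (16)*Y1*Y1*Y1*m1*m1 + (64)*Y1*Y1*Y1*e*k1*k1 + (64)*Y1*Y1*Y1*e*m1*m1 + (128)*Y1*Y1*Y1*e*e*k1*k1 + (-6)*X1*k1 + (-24)*X1*m1*k1 + (-8)*X1*e*k1 + (-96)*X1*e*m1*k1 + (-8)*X1*Y1*k1 + (-96)*X1*Y1*m1*k1 + (-32)*X1*Y1*e*k1 + (-384)*X1*Y1*e*m1*k1 + (-8)*X1*Y1*Y1*k1 + (-96)*X1*Y1*Y1*m1*k1 + (-32)*X1*Y1*Y1*e*k1 + (-384)*X1*Y1*Y1*e*m1*k1 + (1)*X1*X1 + (24)*X1*X1*k1*k1 + (16)*X1*X1*m1 + (48)*X1*X1*m1*m1 + (96)*X1*X1*e*k1*k1 + (2)*X1*X1*Y1 + (48)*X1*X1*Y1*k1*k1 + (32)*X1*X1*Y1*m1 + (96)*X1*X1*Y1*m1*m1 + (192)*X1*X1*Y1*e*k1*k1 + (-16)*X1*X1*X1*k1 + (-64)*X1*X1*X1*m1*k1)"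
    unfolding g_def D_def cV0_def cV1_def fst_conv snd_conv by (simp_all add: algebra_simps)
  have nzT: "fst T = 16*((-1)*k1*k1 + (4)*m1 + (-2)*m1*m1 + (-8)*e*k1*k1 + (-8)*e*m1*m1 + (-16)*e*e*k1*k1 + (-4)*Y1*k1*k1 + (-8)*Y1*m1*m1 + (-32)*Y1*e*k1*k1 + (-32)*Y1*e*m1*m1 + (-64)*Y1*e*e*k1*k1 + (-4)*Y1*Y1*k1*k1 + (-8)*Y1*Y1*m1*m1 + (-32)*Y1*Y1*e*k1*k1 + (-32)*Y1*Y1*e*m1*m1 + (-64)*Y1*Y1*e*e*k1*k1 + (2)*X1*k1 + (16)*X1*m1*k1 + (8)*X1*e*k1 + (64)*X1*e*m1*k1 + (4)*X1*Y1*k1 + (32)*X1*Y1*m1*k1 + (16)*X1*Y1*e*k1 + (128)*X1*Y1*e*m1*k1 + (-1)*X1*X1 + (-8)*X1*X1*k1*k1 + (-8)*X1*X1*m1 + (-16)*X1*X1*m1*m1 + (-32)*X1*X1*e*k1*k1) + 8"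
    unfolding T_def D_def zs_mul_def d_def n0_def fst_conv by (simp add: algebra_simps)
  have Tnz: "fst T \<noteq> 0 \<or> snd T \<noteq> 0" using ne168[OF nzT] by blast
  have Dnz: "fst D \<noteq> 0 \<or> snd D \<noteq> 0"
  proof (rule ccontr)
    assume "\<not> (fst D \<noteq> 0 \<or> snd D \<noteq> 0)"
    hence z: "fst D = 0" "snd D = 0" by auto
    have "(4*X1)*fst D + d*(2*Y1+1)*snd D = (4*m1)*((4*X1)^2 - d*(2*Y1+1)^2) + (4*X1)^2"
      unfolding D_def d_def fst_conv snd_conv by (simp add: algebra_simps power2_eq_square)
    hence "0 = (4*m1)*6 + 16*(X1*X1)" using z rel unfolding d_def by (simp add: power2_eq_square)
    moreover have "(X1*X1) mod 3 = 1" using sq_mod3[OF m3(1)] .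
    ultimately show False by presburger
  qed
  have "good d n0 D s g h"
    by (rule good_intro[OF d4 dpp r1 r2'[unfolded T_def] L2[OF q1(1) h3(1)] L2[OF q1(2) h3(2)]
      L4[OF q2(1) h3(1)] L4[OF q2(2) h3(2)] L4b[OF q3(1) h3(1)] L4b[OF q3(2) h3(2)] _ Dnz Tnz[unfolded T_def fst_conv snd_conv]])
     (use ne42[of "4*Y1+2" Y1] in \<open>simp add: g_def\<close>)
  thus ?thesis unfolding d_def n0_def by blast
qed


lemma modred: "((a::int)*a - d*(b*b)) mod M = ((a mod M)*(a mod M) - (d mod M)*((b mod M)*(b mod M))) mod M"
  by (intro mod_add_cong mod_mult_cong mod_diff_cong mymod refl)

lemma enum8: "\<forall>a\<in>{0,1,2,3,4,5,6,7::int}. \<forall>b\<in>{0,1,2,3,4,5,6,7::int}. \<forall>c\<in>{2,6::int}.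
   (a*a - c*(b*b)) mod 8 = 7 \<longrightarrow> (a mod 2 = 1 \<and> b mod 2 = 1 \<and> c = 2)"
  by simp

lemma enum16: "\<forall>a\<in>{0,1,2,3,4,5,6,7,8,9,10,11,12,13,14,15::int}. \<forall>b\<in>{0,1,2,3,4,5,6,7,8,9,10,11,12,13,14,15::int}. \<forall>c\<in>{2,10::int}.
   (a*a - c*(b*b)) mod 16 = 6 \<longrightarrow> (a mod 4 = 0 \<and> b mod 2 = 1)"
  by simp

lemma enum3: "\<forall>a\<in>{0,1,2::int}. \<forall>b\<in>{0,1,2::int}. \<forall>c\<in>{0,1,2::int}. \<forall>f\<in>{0,1,2::int}. \<forall>g\<in>{0,1,2::int}.
   \<not>(a = 0 \<and> b = 0) \<longrightarrow> (a*a - c*(b*b)) mod 3 = 0 \<longrightarrow> (f*f - c*(g*g)) mod 3 = 2 \<longrightarrow> (a \<noteq> 0 \<and> b \<noteq> 0 \<and> c = 1 \<and> f = 0)"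
  by simp

lemma res8: "(x::int) mod 8 \<in> {0,1,2,3,4,5,6,7}"
proof -
  have "x mod 8 = 0 \<or> x mod 8 = 1 \<or> x mod 8 = 2 \<or> x mod 8 = 3 \<or> x mod 8 = 4 \<or> x mod 8 = 5 \<or> x mod 8 = 6 \<or> x mod 8 = 7" by presburger
  thus ?thesis by simp
qed
lemma res16: "(x::int) mod 16 \<in> {0,1,2,3,4,5,6,7,8,9,10,11,12,13,14,15}"
proof -
  have "x mod 16 = 0 \<or> x mod 16 = 1 \<or> x mod 16 = 2 \<or> x mod 16 = 3 \<or> x mod 16 = 4 \<or> x mod 16 = 5 \<or> x mod 16 = 6 \<or> x mod 16 = 7 \<or>
        x mod 16 = 8 \<or> x mod 16 = 9 \<or> x mod 16 = 10 \<or> x mod 16 = 11 \<or> x mod 16 = 12 \<or> x mod 16 = 13 \<or> x mod 16 = 14 \<or> x mod 16 = 15" by presburger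
  thus ?thesis by simp
qed
lemma res3: "(x::int) mod 3 \<in> {0,1,2}"
proof -
  have "x mod 3 = 0 \<or> x mod 3 = 1 \<or> x mod 3 = 2" by presburger
  thus ?thesis by simp
qed

lemma facts_pell:
  fixes d x y X Y :: int
  assumes d4: "d mod 4 = 2" and p1: "x^2 - d*y^2 = -1" and p6: "X^2 - d*Y^2 = 6"
  shows "d mod 8 = 2" "odd x" "odd y" "X mod 4 = 0" "Y mod 2 = 1"
    "X mod 3 \<noteq> 0" "Y mod 3 \<noteq> 0" "d mod 3 = 1" "x mod 3 = 0"
proof -
  have "d mod 8 = 2 \<or> d mod 8 = 6" using d4 by presburger
  hence dm8: "d mod 8 \<in> {2,6}" by simp
  have q1: "((x mod 8)*(x mod 8) - (d mod 8)*((y mod 8)*(y mod 8))) mod 8 = 7"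
    using modred[of x d y 8] p1 by (simp add: power2_eq_square)
  have r1: "(x mod 8) mod 2 = 1 \<and> (y mod 8) mod 2 = 1 \<and> d mod 8 = 2"
    using bspec[OF bspec[OF bspec[OF enum8 res8[of x]] res8[of y]] dm8] q1 by blast
  thus d8: "d mod 8 = 2" and "odd x" "odd y" by (auto simp: mod_mod_cancel odd_iff_mod_2_eq_one)
  have "d mod 16 = 2 \<or> d mod 16 = 10" using d8 by presburger
  hence dm16: "d mod 16 \<in> {2,10}" by simp
  have q2: "((X mod 16)*(X mod 16) - (d mod 16)*((Y mod 16)*(Y mod 16))) mod 16 = 6"
    using modred[of X d Y 16] p6 by (simp add: power2_eq_square)
  have r2: "(X mod 16) mod 4 = 0 \<and> (Y mod 16) mod 2 = 1"
    using bspec[OF bspec[OF bspec[OF enum16 res16[of X]] res16[of Y]] dm16] q2 by blast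
  thus "X mod 4 = 0" "Y mod 2 = 1" by (auto simp: mod_mod_cancel)
  have q3: "((X mod 3)*(X mod 3) - (d mod 3)*((Y mod 3)*(Y mod 3))) mod 3 = 0"
    using modred[of X d Y 3] p6 by (simp add: power2_eq_square)
  have q4: "((x mod 3)*(x mod 3) - (d mod 3)*((y mod 3)*(y mod 3))) mod 3 = 2"
    using modred[of x d y 3] p1 by (simp add: power2_eq_square)
  have nn: "\<not> (X mod 3 = 0 \<and> Y mod 3 = 0)"
  proof
    assume "X mod 3 = 0 \<and> Y mod 3 = 0"
    then obtain X' Y' where "X = 3*X'" "Y = 3*Y'" by (metis dvd_def dvd_eq_mod_eq_0)
    hence "9*(X'^2 - d*Y'^2) = 6" using p6 by (simp add: power2_eq_square algebra_simps)
    thus False by presburger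
  qed
  have "X mod 3 \<noteq> 0 \<and> Y mod 3 \<noteq> 0 \<and> d mod 3 = 1 \<and> x mod 3 = 0"
    by (rule mp[OF mp[OF mp[OF bspec[OF bspec[OF bspec[OF bspec[OF bspec[OF enum3 res3[of X]] res3[of Y]] res3[of d]] res3[of x]] res3[of y]] nn] q3] q4])
  thus "X mod 3 \<noteq> 0" "Y mod 3 \<noteq> 0" "d mod 3 = 1" "x mod 3 = 0" by auto
qed

lemma mul_mod3: "((k::int)*z) mod 3 = 0 \<Longrightarrow> z mod 3 \<noteq> 0 \<Longrightarrow> k mod 3 = 0"
proof -
  assume a: "(k*z) mod 3 = 0" "z mod 3 \<noteq> 0"
  have "(k*z) mod 3 = ((k mod 3)*(z mod 3)) mod 3" by (simp add: mod_mult_eq)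
  moreover have "k mod 3 \<in> {0,1,2}" "z mod 3 \<in> {1,2}" using a(2) by auto
  ultimately show ?thesis using a(1) by auto
qed

lemma nz_mod3: "(x::int) mod 3 \<noteq> 0 \<Longrightarrow> y mod 3 \<noteq> 0 \<Longrightarrow> (x*y) mod 3 \<noteq> 0"
proof -
  assume a: "x mod 3 \<noteq> 0" "y mod 3 \<noteq> 0"
  have "(x*y) mod 3 = ((x mod 3)*(y mod 3)) mod 3" by (simp add: mod_mult_eq)
  moreover have "x mod 3 \<in> {1,2}" "y mod 3 \<in> {1,2}" using a by auto
  ultimately show ?thesis by auto
qed



definition Dm :: "int \<Rightarrow> int \<Rightarrow> int \<Rightarrow> int \<Rightarrow> int \<Rightarrow> zsqrt" where
  "Dm m k X Y d = ((m+1)*X - k*d*Y, k*X - m*Y)"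

lemma caseB2:
  fixes m1 k1 X1 Y1 e :: int
  assumes rel: "(4*X1)^2 - (8*e+2)*(2*Y1+1)^2 = 6" and dp: "8*e+2 > 0"
    and Tn: "zs_mul (8*e+2) (Dm (4*m1+2) (2*k1) (4*X1) (2*Y1+1) (8*e+2)) (Dm (4*m1+2) (2*k1) (4*X1) (2*Y1+1) (8*e+2)) \<noteq> (4*(4*(4*m1+2)+2), 4*(4*(2*k1)))"
  shows "\<exists>D s g h. good (8*e+2) (4*(4*m1+2)+2, 4*(2*k1)) D s g h"
proof (rule caseB[OF rel dp])
  have e0: "(-4)*k1 + (-16)*e*k1 + (-8)*Y1*k1 + (-32)*Y1*e*k1 + (12)*X1 + (16)*X1*m1 = (4*m1+2+1)*(4*X1) - (2*k1)*(8*e+2)*(2*Y1+1)" by (simp add: algebra_simps)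
  have e1: "(-2) + (-4)*m1 + (-4)*Y1 + (-8)*Y1*m1 + (8)*X1*k1 = (2*k1)*(4*X1) - (4*m1+2)*(2*Y1+1)" by (simp add: algebra_simps)
  show "4*(4*(4*m1+2)+2) - (((-4)*k1 + (-16)*e*k1 + (-8)*Y1*k1 + (-32)*Y1*e*k1 + (12)*X1 + (16)*X1*m1)*((-4)*k1 + (-16)*e*k1 + (-8)*Y1*k1 + (-32)*Y1*e*k1 + (12)*X1 + (16)*X1*m1) + (8*e+2)*((-2) + (-4)*m1 + (-4)*Y1 + (-8)*Y1*m1 + (8)*X1*k1)*((-2) + (-4)*m1 + (-4)*Y1 + (-8)*Y1*m1 + (8)*X1*k1)) \<noteq> 0 \<or> 4*(4*(2*k1)) - (((-4)*k1 + (-16)*e*k1 + (-8)*Y1*k1 + (-32)*Y1*e*k1 + (12)*X1 + (16)*X1*m1)*((-2) + (-4)*m1 + (-4)*Y1 + (-8)*Y1*m1 + (8)*X1*k1) + ((-2) + (-4)*m1 + (-4)*Y1 + (-8)*Y1*m1 + (8)*X1*k1)*((-4)*k1 + (-16)*e*k1 + (-8)*Y1*k1 + (-32)*Y1*e*k1 + (12)*X1 + (16)*X1*m1)) \<noteq> 0"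
    using Tn unfolding e0 e1 zs_mul_def Dm_def by auto
qed
lemma even_case:
  fixes d m k X Y :: int
  assumes d8: "d mod 8 = 2" and dp: "d > 0" and rel: "X^2 - d*Y^2 = 6"
    and X4: "X mod 4 = 0" and Yo: "Y mod 2 = 1" and X3: "X mod 3 \<noteq> 0" and Y3: "Y mod 3 \<noteq> 0"
    and d3: "d mod 3 = 1"
    and me: "even m" and exc: "\<not> (m mod 4 = 0 \<and> even k \<and> m mod 3 = 0 \<and> k mod 3 = 0)"
  shows "\<exists>D s g h. good d (4*m+2, 4*k) D s g h"
proof -
  define e where "e = d div 8"
  have de: "d = 8*e+2" using d8 unfolding e_def by presburger
  define X1 where "X1 = X div 4"
  have X1: "X = 4*X1" using X4 unfolding X1_def by presburger
  define Y1 where "Y1 = Y div 2"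
  have Y1: "Y = 2*Y1+1" using Yo unfolding Y1_def by presburger
  have rel1: "(4*X1)^2 - (8*e+2)*(2*Y1+1)^2 = 6" using rel X1 Y1 de by simp
  have rel2: "(4*X1)^2 - (8*e+2)*(2*(-Y1-1)+1)^2 = 6" using rel1 by (simp add: power2_eq_square algebra_simps)
  have dp1: "8*e+2 > 0" using dp de by simp
  have X0: "X \<noteq> 0" using X3 by auto
  have d4': "d mod 4 = 2" using d8 by presburger
  have Y0: "Y \<noteq> 0" using Yo by auto
  have "odd k \<or> (even k \<and> m mod 4 = 2) \<or> (even k \<and> m mod 4 = 0)" using me by presburger
  then consider (A) "odd k" | (B) "even k" "m mod 4 = 2" | (C) "even k" "m mod 4 = 0" by blast
  then show ?thesis
  proof cases
    case A
    define m1 where "m1 = m div 2"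
    define k1 where "k1 = k div 2"
    have mk: "m = 2*m1" "k = 2*k1+1" using me A unfolding m1_def k1_def by presburger+
    show ?thesis using caseA[OF rel1 dp1, of m1 k1] de mk by simp
  next
    case B
    define m1 where "m1 = m div 4"
    define k1 where "k1 = k div 2"
    have mk: "m = 4*m1+2" "k = 2*k1" using B unfolding m1_def k1_def by presburger+
    define n where "n = (4*m+2, 4*k)"
    have "zs_mul d (Dm m k X Y d) (Dm m k X Y d) \<noteq> (4*fst n, 4*snd n) \<or>
          zs_mul d (Dm m k X (-Y) d) (Dm m k X (-Y) d) \<noteq> (4*fst n, 4*snd n)"
    proof (rule ccontr)
      assume "\<not> ?thesis"
      hence z1: "zs_mul d (Dm m k X Y d) (Dm m k X Y d) = (4*fst n, 4*snd n)"
        and z2: "zs_mul d (Dm m k X (-Y) d) (Dm m k X (-Y) d) = (4*fst n, 4*snd n)" by auto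
      have "(phi d (Dm m k X Y d))^2 = (phi d (Dm m k X (-Y) d))^2"
        using arg_cong[OF z1, of "phi d"] arg_cong[OF z2, of "phi d"] dp
        by (simp add: phi_mul power2_eq_square)
      hence "phi d (Dm m k X Y d) = phi d (Dm m k X (-Y) d) \<or> phi d (Dm m k X Y d) = - phi d (Dm m k X (-Y) d)"
        by (simp add: power2_eq_iff)
      moreover have "- phi d (Dm m k X (-Y) d) = phi d (zneg (Dm m k X (-Y) d))" by (simp add: phi_neg)
      ultimately have "Dm m k X Y d = Dm m k X (-Y) d \<or> Dm m k X Y d = zneg (Dm m k X (-Y) d)"
        using phi_inj[OF d4' dp] by metis
      thus False
      proof
        assume "Dm m k X Y d = Dm m k X (-Y) d"
        hence "k*X - m*Y = k*X + m*Y" unfolding Dm_def by simp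
        hence "m*Y = 0" by simp
        hence "m = 0" using Y0 by simp
        thus False using mk by presburger
      next
        assume "Dm m k X Y d = zneg (Dm m k X (-Y) d)"
        hence "(m+1)*X - k*d*Y = - ((m+1)*X + k*d*Y)" unfolding Dm_def zneg_def by simp
        hence "(m+1)*X = 0" by linarith
        hence "m + 1 = 0" using X0 by simp
        thus False using mk by presburger
      qed
    qed
    thus ?thesis
    proof
      assume T: "zs_mul d (Dm m k X Y d) (Dm m k X Y d) \<noteq> (4*fst n, 4*snd n)"
      show ?thesis using caseB2[OF rel1 dp1, of m1 k1] T unfolding n_def mk de X1 Y1 by simp
    next
      assume T: "zs_mul d (Dm m k X (-Y) d) (Dm m k X (-Y) d) \<noteq> (4*fst n, 4*snd n)"
      have "-Y = 2*(-Y1-1)+1" using Y1 by simp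
      thus ?thesis using caseB2[OF rel2 dp1, of m1 k1] T unfolding n_def mk de X1 by simp
    qed
  next
    case C
    define m1 where "m1 = m div 4"
    define k1 where "k1 = k div 2"
    have mk: "m = 4*m1" "k = 2*k1" using C unfolding m1_def k1_def by presburger+
    have cX: "X1 mod 3 \<noteq> 0" using X3 X1 by presburger
    have cY: "Y1 mod 3 \<noteq> 1" using Y3 Y1 by presburger
    have cY': "(-Y1-1) mod 3 \<noteq> 1" using Y3 Y1 by presburger
    have ce: "e mod 3 = 1" using d3 de by presburger
    have XY3: "(X*Y) mod 3 \<noteq> 0" using nz_mod3[OF X3 Y3] .
    have "(m - k*(X*Y)) mod 3 \<noteq> 0 \<or> (m + k*(X*Y)) mod 3 \<noteq> 0"
    proof (rule ccontr)
      assume "\<not> ?thesis"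
      hence a: "(m - k*(X*Y)) mod 3 = 0" "(m + k*(X*Y)) mod 3 = 0" by auto
      define t where "t = k*(X*Y)"
      have "m mod 3 = 0" "t mod 3 = 0" using a unfolding t_def[symmetric] by presburger+
      hence "m mod 3 = 0" "k mod 3 = 0" using mul_mod3[of k "X*Y"] XY3 unfolding t_def by auto
      thus False using exc C by simp
    qed
    thus ?thesis
    proof
      assume a: "(m - k*(X*Y)) mod 3 \<noteq> 0"
      have "(4*m1 - 2*k1*(4*X1)*(2*Y1+1)) mod 3 \<noteq> 0" using a unfolding mk X1 Y1 by (simp add: algebra_simps)
      thus ?thesis using caseC[OF rel1 dp1 cX cY ce] unfolding mk de by simp
    next
      assume a: "(m + k*(X*Y)) mod 3 \<noteq> 0"
      have "(4*m1 - 2*k1*(4*X1)*(2*(-Y1-1)+1)) mod 3 \<noteq> 0" using a unfolding mk X1 Y1 by (simp add: algebra_simps)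
      thus ?thesis using caseC[OF rel2 dp1 cX cY' ce] unfolding mk de by simp
    qed
  qed
qed


theorem theorem1p3:
  fixes d m k :: int
  assumes "d > 0" and "squarefree d" and "d mod 4 = 2"
    and "\<exists>x y :: int. x^2 - d * y^2 = -1"
    and "\<exists>x y :: int. x^2 - d * y^2 = 6"
    and "\<not> (m mod 12 = 9 \<and> k mod 6 = 3)"
    and "\<not> (m mod 12 = 0 \<and> k mod 6 = 0)"
  shows "infinite {S. D_quadruple d (4 * m + 2, 4 * k) S}"
proof -
  obtain x y where p1: "x^2 - d*y^2 = -1" using assms(4) by blast
  obtain X Y where p6: "X^2 - d*Y^2 = 6" using assms(5) by blast
  note F = facts_pell[OF assms(3) p1 p6]
  define n where "n = (4*m+2, 4*k)"
  have d0: "d \<ge> 0" using assms(1) by simp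
  have main: "\<exists>n0 w D s g h. good d n0 D s g h \<and> phi d w \<noteq> 0 \<and> phi d n = (phi d w)^2 * phi d n0"
  proof (cases "even m")
    case True
    have exc: "\<not> (m mod 4 = 0 \<and> even k \<and> m mod 3 = 0 \<and> k mod 3 = 0)" using assms(7) by presburger
    obtain D s g h where G: "good d (4*m+2, 4*k) D s g h"
      using even_case[OF F(1) assms(1) p6 F(4) F(5) F(6) F(7) F(8) True exc] by blast
    have "phi d (1,0) = 1" by (simp add: phi_def)
    hence "good d n D s g h \<and> phi d (1,0) \<noteq> 0 \<and> phi d n = (phi d (1,0))^2 * phi d n"
      using G unfolding n_def by simp
    thus ?thesis by blast
  next
    case False
    define m' where "m' = 2*m*x^2 + m + x^2 - 2*d*k*x*y"
    define k' where "k' = k*(2*x^2+1) - x*y*(2*m+1)"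
    have xo: "odd x" and yo: "odd y" using F(2,3) .
    have mev: "even m'" unfolding m'_def using False xo by simp
    obtain a where a: "x = 2*a+1" using xo oddE by blast
    have "even d" using assms(3) by presburger
    then obtain d1 where d1: "d = 2*d1" by blast
    have xx: "x^2 - 1 = 4*(a*(a+1))" using a by (simp add: algebra_simps power2_eq_square)
    have "m' - 3*m - 1 = 2*m*(x^2-1) + (x^2-1) - 2*d*k*x*y" unfolding m'_def by (simp add: algebra_simps)
    also have "\<dots> = 4*(2*m*(a*(a+1)) + a*(a+1) - d1*k*x*y)" unfolding xx d1 by (simp add: algebra_simps)
    finally have m4: "(m' - 3*m - 1) mod 4 = 0" by simp
    have k2: "even (k' - k - 1)" unfolding k'_def using xo yo by simp
    have x3: "3 dvd x" using F(9) by presburger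
    have "m' - m = x*(2*m*x + x - 2*d*k*y)" unfolding m'_def by (simp add: algebra_simps power2_eq_square)
    hence m3: "(m' - m) mod 3 = 0" using x3 by (simp add: dvd_eq_mod_eq_0[symmetric])
    have "k' - k = x*(2*k*x - y*(2*m+1))" unfolding k'_def by (simp add: algebra_simps power2_eq_square)
    hence k3: "(k' - k) mod 3 = 0" using x3 by (simp add: dvd_eq_mod_eq_0[symmetric])
    have exc: "\<not> (m' mod 4 = 0 \<and> even k' \<and> m' mod 3 = 0 \<and> k' mod 3 = 0)"
      using m4 k2 m3 k3 False assms(6) by presburger
    obtain D s g h where G: "good d (4*m'+2, 4*k') D s g h"
      using even_case[OF F(1) assms(1) p6 F(4) F(5) F(6) F(7) F(8) mev exc] by blast
    have d4: "d mod 4 = 2" by (rule assms(3))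
    have x0: "x \<noteq> 0" using xo by auto
    have wnz: "phi d (x,y) \<noteq> 0" using phi_nz[OF d4 assms(1), of "(x,y)"] x0 by simp
    have pe: "zs_mul d (zs_mul d (x,y) (x,y)) (4*m'+2, 4*k') = n"
    proof (rule prod_eqI)
      have "fst (zs_mul d (zs_mul d (x,y) (x,y)) (4*m'+2, 4*k')) - fst n =
        ((-2) + 4*x*x + 8*k*x*y*d - 4*m + 8*m*x*x) * (x*x - d*y*y + 1)"
        unfolding zs_mul_def m'_def k'_def n_def by (simp add: algebra_simps power2_eq_square)
      moreover have "x*x - d*y*y + 1 = 0" using p1 by (simp add: power2_eq_square)
      ultimately show "fst (zs_mul d (zs_mul d (x,y) (x,y)) (4*m'+2, 4*k')) = fst n" by simp
      have "snd (zs_mul d (zs_mul d (x,y) (x,y)) (4*m'+2, 4*k')) - snd n =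
        (4*x*y - 4*k + 8*k*x*x + 8*m*x*y) * (x*x - d*y*y + 1)"
        unfolding zs_mul_def m'_def k'_def n_def by (simp add: algebra_simps power2_eq_square)
      with \<open>x*x - d*y*y + 1 = 0\<close> show "snd (zs_mul d (zs_mul d (x,y) (x,y)) (4*m'+2, 4*k')) = snd n" by simp
    qed
    have "phi d n = (phi d (x,y))^2 * phi d (4*m'+2, 4*k')"
      unfolding pe[symmetric] by (simp add: phi_mul[OF d0] power2_eq_square)
    thus ?thesis using G wnz by blast
  qed
  then obtain n0 w D s g h where G: "good d n0 D s g h" and wnz: "phi d w \<noteq> 0"
    and nn: "phi d n = (phi d w)^2 * phi d n0" by blast
  have "infinite {S. D_quadruple d n S}"
  proof -
    note G' = G[unfolded good_def]
    show ?thesis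
      by (rule generic[OF assms(3) assms(1) p1 G'[THEN conjunct1] G'[THEN conjunct2, THEN conjunct1]
        G'[THEN conjunct2, THEN conjunct2, THEN conjunct1]
        G'[THEN conjunct2, THEN conjunct2, THEN conjunct2, THEN conjunct1]
        G'[THEN conjunct2, THEN conjunct2, THEN conjunct2, THEN conjunct2, THEN conjunct1]
        G'[THEN conjunct2, THEN conjunct2, THEN conjunct2, THEN conjunct2, THEN conjunct2, THEN conjunct1]
        G'[THEN conjunct2, THEN conjunct2, THEN conjunct2, THEN conjunct2, THEN conjunct2, THEN conjunct2, THEN conjunct1]
        G'[THEN conjunct2, THEN conjunct2, THEN conjunct2, THEN conjunct2, THEN conjunct2, THEN conjunct2, THEN conjunct2, THEN conjunct1]
        G'[THEN conjunct2, THEN conjunct2, THEN conjunct2, THEN conjunct2, THEN conjunct2, THEN conjunct2, THEN conjunct2, THEN conjunct2, THEN conjunct1]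
        G'[THEN conjunct2, THEN conjunct2, THEN conjunct2, THEN conjunct2, THEN conjunct2, THEN conjunct2, THEN conjunct2, THEN conjunct2, THEN conjunct2, THEN conjunct1]
        G'[THEN conjunct2, THEN conjunct2, THEN conjunct2, THEN conjunct2, THEN conjunct2, THEN conjunct2, THEN conjunct2, THEN conjunct2, THEN conjunct2, THEN conjunct2]
        wnz nn])
  qed
  thus ?thesis unfolding n_def .
qed

end
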